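(* Consider the causal adversarial multi-path network model described in the context, with links of unequal capacities $u_1,\dots,u_C$, overwrite jamming, no feedback and no secrecy requirement. For any $\vec z=(z_{rw},z_{ro},z_{wo})$ with $z_{rw}+z_{ro}+z_{wo}\le C$, the capacity is $$R^{ow}_j(\hat C,\vec z)=\begin{cases} \hat C-(U_{z_{rw}+z_{wo}})_{\max} & \text{if } 2z_{wo}+2z_{rw}<C,\\ 0 & \text{otherwise.}\end{cases}$$
   Context: Model. A sender (Alice) communicates with a receiver (Bob) over $C$ parallel directed noiseless links $L_1,\dots,L_C$, where link $L_i$ has capacity $u_i$ (it carries $u_i$ units of information per time slot; large-alphabet regime), and $\hat C=\sum_{i=1}^C u_i$. For an integer $w$, $(U_w)_{\max}$ denotes the maximum, over all sets of $w$ links, of the sum of their capacities. A code of block length $n$ and rate $R$ has message $M$ uniform on $\{0,1\}^{nR}$; the encoder is stochastic, using private randomness unknown to the adversary, and maps message and randomness to codewords $\vec X_i$ sent on $L_i$; the decoder maps the received words $\vec Y_1,\dots,\vec Y_C$ to $\hat M$. Adversary. Calvin, who knows the encoder and decoder, selects pairwise disjoint link sets $Z_{rw},Z_{ro},Z_{wo}$ (unknown to Alice and Bob) with $|Z_{rw}|\le z_{rw}$, $|Z_{ro}|\le z_{ro}$, $|Z_{wo}|\le z_{wo}$; he reads the links in $Z_r=Z_{rw}\cup Z_{ro}$ and jams the links in $Z_w=Z_{rw}\cup Z_{wo}$. He is causal: his jamming of the $t$-th symbols may depend only on the first $t$ symbols observed on $Z_r$. Under additive jamming $\vec Y_i=\vec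 X_i+\vec E_i$ with $\vec E_i$ chosen by Calvin and $\vec E_i=0$ for $i\notin Z_w$; under overwrite jamming $\vec Y_i=\vec E_i$ for $i\in Z_w$ and $\vec Y_i=\vec X_i$ otherwise. Rate $R$ is achievable if for every $\varepsilon>0$ and all sufficiently large $n$ there is a code with $\Pr[\hat M\ne M]<\varepsilon$ against every admissible causal adversary; the capacity is the supremum of achievable rates. No feedback: the encoder's output depends only on the message and Alice's randomness. *)

theory Defs
  imports "HOL-Probability.Probability"
begin

text \<open>
  In the large-alphabet regime a link of capacity u i
  carries one symbol from an alphabet of size q ^ u i per time slot (i.e. u i
  units of information, one unit = log q).  A word transmitted over the whole
  network during n slots is a function x :: nat => nat => nat, where x i t is
  the symbol on link i at slot t; outside i < C, t < n it is 0.
\<close>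

type_synonym netword = "nat \<Rightarrow> nat \<Rightarrow> nat"

definition valid_word :: "nat \<Rightarrow> (nat \<Rightarrow> nat) \<Rightarrow> nat \<Rightarrow> nat \<Rightarrow> netword \<Rightarrow> bool" where
  "valid_word C u q n x \<longleftrightarrow>
     (\<forall>i t. (i < C \<and> t < n \<longrightarrow> x i t < q ^ u i) \<and> (\<not> (i < C \<and> t < n) \<longrightarrow> x i t = 0))"

text \<open>Number of messages of a rate-R code of block length n (R in units of log q).\<close>
definition num_msgs :: "nat \<Rightarrow> nat \<Rightarrow> real \<Rightarrow> nat" where
  "num_msgs q n R = nat \<lceil>real q powr (real n * R)\<rceil>"

text \<open>Admissible adversary: disjoint link sets Zrw, Zro, Zwo within the C links with the
  given size bounds, and a jamming strategy J: J i t x is the symbol Calvin writes on link i at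
  slot t, which is an alphabet symbol and depends causally only on the symbols seen on
  Zr = Zrw \<union> Zro up to and including slot t.  (A randomised adversary is a mixture of
  these, so the worst-case average error is the same.)\<close>
definition admissible_adv ::
  "nat \<Rightarrow> (nat \<Rightarrow> nat) \<Rightarrow> nat \<Rightarrow> nat \<Rightarrow> nat \<times> nat \<times> nat \<Rightarrow>
   nat set \<Rightarrow> nat set \<Rightarrow> nat set \<Rightarrow> (nat \<Rightarrow> nat \<Rightarrow> netword \<Rightarrow> nat) \<Rightarrow> bool" where
  "admissible_adv C u q n z Zrw Zro Zwo J \<longleftrightarrow>
     (case z of (zrw, zro, zwo) \<Rightarrow>
       Zrw \<subseteq> {0..<C} \<and> Zro \<subseteq> {0..<C} \<and> Zwo \<subseteq> {0..<C} \<and>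
       Zrw \<inter> Zro = {} \<and> Zrw \<inter> Zwo = {} \<and> Zro \<inter> Zwo = {} \<and>
       card Zrw \<le> zrw \<and> card Zro \<le> zro \<and> card Zwo \<le> zwo \<and>
       (\<forall>i t x. J i t x < q ^ u i) \<and>
       (\<forall>i t x x'. (\<forall>j \<in> Zrw \<union> Zro. \<forall>s \<le> t. x j s = x' j s) \<longrightarrow> J i t x = J i t x'))"

definition received_ow :: "nat \<Rightarrow> nat \<Rightarrow> nat set \<Rightarrow> (nat \<Rightarrow> nat \<Rightarrow> netword \<Rightarrow> nat) \<Rightarrow> netword \<Rightarrow> netword" where
  "received_ow C n Zw J x =
     (\<lambda>i t. if i < C \<and> t < n then (if i \<in> Zw then J i t x else x i t) else 0)"

definition err_prob :: "nat \<Rightarrow> (nat \<Rightarrow> netword pmf) \<Rightarrow> (netword \<Rightarrow> nat) \<Rightarrow> (netword \<Rightarrow> netword) \<Rightarrow> real" where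
  "err_prob K enc dec chan =
     (\<Sum>m<K. measure_pmf.prob (enc m) {x. dec (chan x) \<noteq> m}) / real K"

definition good_code_ow ::
  "nat \<Rightarrow> (nat \<Rightarrow> nat) \<Rightarrow> nat \<times> nat \<times> nat \<Rightarrow> nat \<Rightarrow> nat \<Rightarrow> real \<Rightarrow> real \<Rightarrow> bool" where
  "good_code_ow C u z q n R \<epsilon> \<longleftrightarrow>
     (\<exists>(enc :: nat \<Rightarrow> netword pmf) (dec :: netword \<Rightarrow> nat).
        (\<forall>m < num_msgs q n R. set_pmf (enc m) \<subseteq> {x. valid_word C u q n x}) \<and>
        (\<forall>Zrw Zro Zwo J. admissible_adv C u q n z Zrw Zro Zwo J \<longrightarrow>
            err_prob (num_msgs q n R) enc dec (received_ow C n (Zrw \<union> Zwo) J) < \<epsilon>))"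

definition achievable_ow :: "nat \<Rightarrow> (nat \<Rightarrow> nat) \<Rightarrow> nat \<times> nat \<times> nat \<Rightarrow> real \<Rightarrow> bool" where
  "achievable_ow C u z R \<longleftrightarrow> R \<ge> 0 \<and>
     (\<forall>\<epsilon>>0. \<exists>Q. \<forall>q\<ge>Q. \<exists>N. \<forall>n\<ge>N. good_code_ow C u z q n R \<epsilon>)"

definition capacity_ow :: "nat \<Rightarrow> (nat \<Rightarrow> nat) \<Rightarrow> nat \<times> nat \<times> nat \<Rightarrow> real" where
  "capacity_ow C u z = Sup {R. achievable_ow C u z R}"

definition total_cap :: "nat \<Rightarrow> (nat \<Rightarrow> nat) \<Rightarrow> nat" where
  "total_cap C u = (\<Sum>i<C. u i)"

definition U_max :: "nat \<Rightarrow> (nat \<Rightarrow> nat) \<Rightarrow> nat \<Rightarrow> nat" where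
  "U_max C u w = Max {(\<Sum>i\<in>S. u i) | S. S \<subseteq> {0..<C} \<and> card S = w}"

end

theory Submission
  imports Defs "HOL-Computational_Algebra.Polynomial"
begin

lemma card_funs:
  fixes P :: "'a set" and B :: "'a \<Rightarrow> 'b set" and d :: "'a \<Rightarrow> 'b"
  assumes "finite P" "\<And>p. p\<in>P \<Longrightarrow> finite (B p)"
  shows "card {f. (\<forall>p\<in>P. f p \<in> B p) \<and> (\<forall>p. p \<notin> P \<longrightarrow> f p = d p)} = (\<Prod>p\<in>P. card (B p))"
proof -
  let ?S = "{f. (\<forall>p\<in>P. f p \<in> B p) \<and> (\<forall>p. p \<notin> P \<longrightarrow> f p = d p)}"
  have "bij_betw (\<lambda>f. restrict f P) ?S (PiE P B)"
  proof (rule bij_betwI[where g = "\<lambda>g p. if p \<in> P then g p else d p"])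
    show "(\<lambda>f. restrict f P) \<in> ?S \<rightarrow> PiE P B" by auto
    show "(\<lambda>g p. if p \<in> P then g p else d p) \<in> PiE P B \<rightarrow> ?S" by (auto simp: PiE_def Pi_def)
    show "\<And>x. x \<in> ?S \<Longrightarrow> (\<lambda>p. if p \<in> P then restrict x P p else d p) = x"
      by (auto simp: fun_eq_iff)
    show "\<And>y. y \<in> PiE P B \<Longrightarrow> restrict (\<lambda>p. if p \<in> P then y p else d p) P = y"
      by (auto simp: fun_eq_iff PiE_def extensional_def)
  qed
  hence "card ?S = card (PiE P B)" by (rule bij_betw_same_card)
  also have "\<dots> = (\<Prod>p\<in>P. card (B p))" using assms by (simp add: card_PiE)
  finally show ?thesis .
qed

lemma card_funs2:
  fixes P :: "(nat \<times> nat) set" and B :: "nat \<Rightarrow> nat \<Rightarrow> nat set" and d :: "nat \<Rightarrow> nat \<Rightarrow> nat"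
  assumes "finite P" "\<And>i t. (i,t)\<in>P \<Longrightarrow> finite (B i t)"
  shows "card {x. (\<forall>i t. (i,t)\<in>P \<longrightarrow> x i t \<in> B i t) \<and> (\<forall>i t. (i,t) \<notin> P \<longrightarrow> x i t = d i t)}
       = (\<Prod>p\<in>P. card (case_prod B p))"
proof -
  let ?S = "{f. (\<forall>p\<in>P. f p \<in> case_prod B p) \<and> (\<forall>p. p \<notin> P \<longrightarrow> f p = case_prod d p)}"
  have eq: "{x. (\<forall>i t. (i,t)\<in>P \<longrightarrow> x i t \<in> B i t) \<and> (\<forall>i t. (i,t) \<notin> P \<longrightarrow> x i t = d i t)} = curry ` ?S"
  proof (intro equalityI subsetI)
    fix x assume "x \<in> {x. (\<forall>i t. (i,t)\<in>P \<longrightarrow> x i t \<in> B i t) \<and> (\<forall>i t. (i,t) \<notin> P \<longrightarrow> x i t = d i t)}"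
    hence "case_prod x \<in> ?S" by auto
    moreover have "x = curry (case_prod x)" by simp
    ultimately show "x \<in> curry ` ?S" by blast
  qed auto
  have "inj_on curry ?S" by (auto simp: inj_on_def curry_def fun_eq_iff)
  hence "card (curry ` ?S) = card ?S" by (rule card_image)
  also have "\<dots> = (\<Prod>p\<in>P. card (case_prod B p))" using assms by (intro card_funs) auto
  finally show ?thesis using eq by simp
qed

lemma card_rows:
  fixes F :: "nat set" and b :: "nat \<Rightarrow> nat" and d :: "nat \<Rightarrow> nat \<Rightarrow> nat"
  assumes "finite F"
  shows "card {x. \<forall>i t. (i \<in> F \<and> t < D \<longrightarrow> x i t < b i) \<and> (\<not>(i \<in> F \<and> t < D) \<longrightarrow> x i t = d i t)}
       = (\<Prod>i\<in>F. b i ^ D)"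
proof -
  have "{x. \<forall>i t. (i \<in> F \<and> t < D \<longrightarrow> x i t < b i) \<and> (\<not>(i \<in> F \<and> t < D) \<longrightarrow> x i t = d i t)}
     = {x. (\<forall>i t. (i,t)\<in>F \<times> {..<D} \<longrightarrow> x i t \<in> {..<b i}) \<and> (\<forall>i t. (i,t) \<notin> F \<times> {..<D} \<longrightarrow> x i t = d i t)}"
    by auto
  also have "card \<dots> = (\<Prod>p\<in>F \<times> {..<D}. card (case_prod (\<lambda>i t. {..<b i}) p))"
    using assms by (intro card_funs2) auto
  also have "\<dots> = (\<Prod>p\<in>F \<times> {..<D}. case_prod (\<lambda>i t. b i) p)"
    by (rule prod.cong) auto
  also have "\<dots> = (\<Prod>i\<in>F. \<Prod>t\<in>{..<D}. b i)"
    by (rule prod.Sigma[symmetric]) (use assms in auto)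
  also have "\<dots> = (\<Prod>i\<in>F. b i ^ D)" by simp
  finally show ?thesis .
qed

lemma prob_correct_le_card:
  fixes p :: "'a pmf" and chan :: "'a \<Rightarrow> 'b"
  assumes "finite Y" "set_pmf p \<subseteq> V" "chan ` V \<subseteq> Y"
  shows "measure_pmf.prob p {x. dec (chan x) = m} \<le> real (card (Y \<inter> {y. dec y = m}))"
proof (cases "Y \<inter> {y. dec y = m} = {}")
  case True
  have "set_pmf p \<inter> {x. dec (chan x) = m} = {}" using True assms by blast
  hence "measure_pmf.prob p {x. dec (chan x) = m} = 0" by (simp add: measure_pmf_zero_iff)
  thus ?thesis by simp
next
  case False
  hence "card (Y \<inter> {y. dec y = m}) \<ge> 1" using assms(1)
    by (metis One_nat_def Suc_leI card_gt_0_iff finite_Int)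
  moreover have "measure_pmf.prob p {x. dec (chan x) = m} \<le> 1" by simp
  ultimately show ?thesis by linarith
qed

lemma err_prob_lower:
  fixes enc :: "nat \<Rightarrow> netword pmf"
  assumes "finite Y" "\<forall>m<K. set_pmf (enc m) \<subseteq> V" "chan ` V \<subseteq> Y" "K > 0"
  shows "err_prob K enc dec chan \<ge> 1 - real (card Y) / real K"
proof -
  have c: "measure_pmf.prob (enc m) {x. dec (chan x) \<noteq> m} = 1 - measure_pmf.prob (enc m) {x. dec (chan x) = m}" for m
  proof -
    have "{x. dec (chan x) \<noteq> m} = UNIV - {x. dec (chan x) = m}" by auto
    thus ?thesis using measure_pmf.prob_compl[of "{x. dec (chan x) = m}" "enc m"] by simp
  qed
  have s1: "(\<Sum>m<K. measure_pmf.prob (enc m) {x. dec (chan x) = m}) \<le> (\<Sum>m<K. real (card (Y \<inter> {y. dec y = m})))"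
    using assms by (intro sum_mono prob_correct_le_card) auto
  have "(\<Sum>m<K. card (Y \<inter> {y. dec y = m})) = card (\<Union>m<K. Y \<inter> {y. dec y = m})"
    using assms(1) by (intro card_UN_disjoint[symmetric]) auto
  also have "\<dots> \<le> card Y" using assms(1) by (intro card_mono) auto
  finally have s2: "(\<Sum>m<K. real (card (Y \<inter> {y. dec y = m}))) \<le> real (card Y)"
    by (metis of_nat_le_iff of_nat_sum)
  have "err_prob K enc dec chan = (\<Sum>m<K. 1 - measure_pmf.prob (enc m) {x. dec (chan x) = m}) / real K"
    unfolding err_prob_def using c by simp
  also have "\<dots> = (real K - (\<Sum>m<K. measure_pmf.prob (enc m) {x. dec (chan x) = m})) / real K"
    by (simp add: sum_subtractf)
  also have "\<dots> \<ge> (real K - real (card Y)) / real K"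
    using s1 s2 assms(4) by (intro divide_right_mono) auto
  finally show ?thesis using assms(4) by (simp add: diff_divide_distrib)
qed


lemma umax_set_finite: "finite {(\<Sum>i\<in>S. u i) | S. S \<subseteq> {0..<(C::nat)} \<and> card S = w}"
proof -
  have "{(\<Sum>i\<in>S. u i) | S. S \<subseteq> {0..<C} \<and> card S = w} \<subseteq> (\<lambda>S. \<Sum>i\<in>S. u i) ` Pow {0..<C}" by auto
  thus ?thesis by (rule finite_subset) auto
qed

lemma umax_attained:
  assumes "w \<le> C"
  shows "\<exists>S. S \<subseteq> {0..<C} \<and> card S = w \<and> (\<Sum>i\<in>S. u i) = U_max C u w"
proof -
  obtain S where "S \<subseteq> {0..<C}" "card S = w" using assms obtain_subset_with_card_n[of w "{0..<C}"] by auto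
  hence ne: "{(\<Sum>i\<in>S. u i) | S. S \<subseteq> {0..<C} \<and> card S = w} \<noteq> {}" by auto
  have "U_max C u w \<in> {(\<Sum>i\<in>S. u i) | S. S \<subseteq> {0..<C} \<and> card S = w}"
    unfolding U_max_def by (rule Max_in[OF umax_set_finite ne])
  thus ?thesis by auto
qed

lemma umax_ge:
  assumes "S \<subseteq> {0..<C}" "card S \<le> w" "w \<le> C"
  shows "(\<Sum>i\<in>S. u i) \<le> U_max C u w"
proof -
  have fS: "finite S" using assms(1) finite_subset by blast
  have "card ({0..<C} - S) = C - card S" using assms(1) fS by (simp add: card_Diff_subset)
  hence "w - card S \<le> card ({0..<C} - S)" using assms by simp
  then obtain T where T: "T \<subseteq> {0..<C} - S" "card T = w - card S"
    using obtain_subset_with_card_n[of "w - card S" "{0..<C} - S"] by metis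
  have fT: "finite T" using T(1) finite_subset by blast
  have "card (S \<union> T) = w" using T fS fT assms(2) by (subst card_Un_disjoint) auto
  moreover have "S \<union> T \<subseteq> {0..<C}" using T assms by auto
  ultimately have "(\<Sum>i\<in>S \<union> T. u i) \<in> {(\<Sum>i\<in>S. u i) | S. S \<subseteq> {0..<C} \<and> card S = w}" by (intro CollectI exI[of _ "S \<union> T"]) simp
  hence "(\<Sum>i\<in>S \<union> T. u i) \<le> U_max C u w" unfolding U_max_def by (rule Max_ge[OF umax_set_finite])
  moreover have "(\<Sum>i\<in>S. u i) \<le> (\<Sum>i\<in>S \<union> T. u i)" using fS fT by (intro sum_mono2) auto
  ultimately show ?thesis by linarith
qed

lemma umax_le_total: "w \<le> C \<Longrightarrow> U_max C u w \<le> total_cap C u"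
proof -
  assume "w \<le> C"
  then obtain S where S: "S \<subseteq> {0..<C}" "(\<Sum>i\<in>S. u i) = U_max C u w" using umax_attained by blast
  have "(\<Sum>i\<in>S. u i) \<le> (\<Sum>i\<in>{0..<C}. u i)" using S by (intro sum_mono2) auto
  thus ?thesis using S by (simp add: total_cap_def atLeast0LessThan)
qed

lemma split_set:
  assumes "finite A" "card A \<le> a + b"
  shows "\<exists>X Y. A = X \<union> Y \<and> X \<inter> Y = {} \<and> card X \<le> a \<and> card Y \<le> b"
proof -
  obtain X where X: "X \<subseteq> A" "card X = min a (card A)" using obtain_subset_with_card_n[of "min a (card A)" A] by auto
  have "card (A - X) = card A - card X" using X assms(1) by (simp add: card_Diff_subset finite_subset)
  hence "card (A - X) \<le> b" using X assms by auto
  moreover have "A = X \<union> (A - X)" "X \<inter> (A - X) = {}" using X by auto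
  ultimately show ?thesis using X by (intro exI[of _ X] exI[of _ "A - X"]) auto
qed

lemma total_split: "A \<subseteq> {0..<C} \<Longrightarrow> total_cap C u = (\<Sum>i\<in>A. u i) + (\<Sum>i\<in>{0..<C} - A. u i)"
  unfolding total_cap_def atLeast0LessThan[symmetric]
  using sum.subset_diff[of A "{0..<C}" u] by simp


lemma num_msgs_ge: "real (num_msgs q n R) \<ge> real q powr (real n * R)"
  unfolding num_msgs_def by (metis nat_ceiling_le_eq of_nat_le_iff order_refl ceiling_le real_nat_ceiling_ge)

lemma num_msgs_pos: "q > 0 \<Longrightarrow> num_msgs q n R > 0"
proof -
  assume "q > 0"
  hence "real q powr (real n * R) > 0" by simp
  hence "real (num_msgs q n R) > 0" using num_msgs_ge[of q n R] by linarith
  thus ?thesis by simp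
qed

lemma valid_word_bound: "valid_word C u q n x \<Longrightarrow> i < C \<Longrightarrow> t < n \<Longrightarrow> x i t < q ^ u i"
  unfolding valid_word_def by blast

lemma valid_word_zero: "valid_word C u q n x \<Longrightarrow> \<not> (i < C \<and> t < n) \<Longrightarrow> x i t = 0"
  unfolding valid_word_def by blast

lemma converse_erasure:
  assumes ach: "achievable_ow C u (zrw, zro, zwo) R" and w: "zrw + zwo \<le> C"
  shows "R \<le> real (total_cap C u) - real (U_max C u (zrw + zwo))"
proof (rule ccontr)
  assume nt: "\<not> ?thesis"
  define V where "V = total_cap C u - U_max C u (zrw+zwo)"
  have Vr: "real V = real (total_cap C u) - real (U_max C u (zrw + zwo))"
    unfolding V_def using umax_le_total[OF w] by (simp add: of_nat_diff)
  have RV: "R - real V > 0" using nt Vr by simp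
  obtain A where A: "A \<subseteq> {0..<C}" "card A = zrw + zwo" "(\<Sum>i\<in>A. u i) = U_max C u (zrw+zwo)"
    using umax_attained[OF w] by blast
  have fA: "finite A" using A(1) finite_subset by blast
  obtain X Y where XY: "A = X \<union> Y" "X \<inter> Y = {}" "card X \<le> zrw" "card Y \<le> zwo"
    using split_set[OF fA, of zrw zwo] A(2) by auto
  from ach obtain Q where Q: "\<forall>q\<ge>Q. \<exists>N. \<forall>n\<ge>N. good_code_ow C u (zrw,zro,zwo) q n R (1/5)"
    unfolding achievable_ow_def by (meson divide_pos_pos zero_less_numeral zero_less_one)
  define q where "q = max Q 2"
  have q2: "q \<ge> 2" unfolding q_def by simp
  obtain N where N: "\<forall>n\<ge>N. good_code_ow C u (zrw,zro,zwo) q n R (1/5)" using Q[rule_format, of q] unfolding q_def by auto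
  obtain n0 :: nat where n0: "1 / (R - real V) < real n0" using reals_Archimedean2 by blast
  define n where "n = max n0 N"
  have nN: "n \<ge> N" unfolding n_def by simp
  have "real n \<ge> real n0" unfolding n_def by simp
  hence "1 / (R - real V) < real n" using n0 by linarith
  hence n1: "real n * (R - real V) \<ge> 1" using RV by (simp add: field_simps)
  define K where "K = num_msgs q n R"
  from N nN obtain enc dec where
    supp: "\<forall>m < K. set_pmf (enc m) \<subseteq> {x. valid_word C u q n x}" and
    err: "\<forall>Zrw Zro Zwo J. admissible_adv C u q n (zrw,zro,zwo) Zrw Zro Zwo J \<longrightarrow>
            err_prob K enc dec (received_ow C n (Zrw \<union> Zwo) J) < 1/5"
    unfolding good_code_ow_def K_def by blast
  define J where "J = (\<lambda>(i::nat) (t::nat) (x::netword). 0::nat)"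
  have adm: "admissible_adv C u q n (zrw,zro,zwo) X {} Y J"
    unfolding admissible_adv_def J_def using A XY q2 by auto
  have e1: "err_prob K enc dec (received_ow C n A J) < 1/5" using err adm XY(1) by auto
  define F where "F = {0..<C} - A"
  define Ys where "Ys = {y. \<forall>i t. (i \<in> F \<and> t < n \<longrightarrow> y i t < q ^ u i) \<and> (\<not>(i \<in> F \<and> t < n) \<longrightarrow> y i t = (\<lambda>_ _. 0::nat) i t)}"
  have cY: "card Ys = (\<Prod>i\<in>F. (q ^ u i) ^ n)" unfolding Ys_def F_def by (rule card_rows) simp
  also have "\<dots> = (\<Prod>i\<in>F. q ^ (u i * n))" by (simp add: power_mult)
  also have "\<dots> = q ^ (\<Sum>i\<in>F. u i * n)" by (simp add: power_sum)
  also have "(\<Sum>i\<in>F. u i * n) = n * V"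
    using total_split[OF A(1), of u] A(3) unfolding V_def F_def by (simp add: sum_distrib_right[symmetric])
  finally have cY2: "card Ys = q ^ (n * V)" .
  have fY: "finite Ys" using cY2 q2 by (metis card.infinite not_one_le_zero one_le_power Suc_1 Suc_le_lessD less_imp_le_nat)
  have sub: "received_ow C n A J ` {x. valid_word C u q n x} \<subseteq> Ys"
    unfolding Ys_def F_def received_ow_def J_def using valid_word_bound by auto
  have Kpos: "K > 0" unfolding K_def using q2 by (intro num_msgs_pos) simp
  have "err_prob K enc dec (received_ow C n A J) \<ge> 1 - real (card Ys) / real K"
    by (rule err_prob_lower[OF fY supp sub Kpos])
  hence "1 - real (card Ys) / real K < 1/5" using e1 by linarith
  hence k1: "real K < 5/4 * real (card Ys)" using Kpos by (simp add: field_simps)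
  have "real K \<ge> real q powr (real n * R)" unfolding K_def by (rule num_msgs_ge)
  also have "real q powr (real n * R) = real q powr (real n * real V) * real q powr (real n * (R - real V))"
    by (simp add: powr_add[symmetric] algebra_simps)
  also have "real q powr (real n * (R - real V)) \<ge> real q powr 1"
    using n1 q2 by (intro powr_mono) auto
  hence "real q powr (real n * real V) * real q powr (real n * (R - real V)) \<ge> real q powr (real n * real V) * 2"
    using q2 by (intro mult_left_mono) auto
  finally have k2: "real K \<ge> 2 * real q powr (real n * real V)" by simp
  have "real q powr (real n * real V) = real (card Ys)"
    using cY2 q2 by (simp add: powr_realpow[symmetric] of_nat_mult[symmetric] del: of_nat_mult)
  moreover have "real (card Ys) > 0" using cY2 q2 by simp
  ultimately show False using k1 k2 by linarith
qed

lemma symm_core: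
  fixes a :: "nat \<Rightarrow> 'x \<Rightarrow> real" and g :: "'x \<Rightarrow> 'x \<Rightarrow> nat"
  assumes fV: "finite V" and K2: "K \<ge> 2"
    and apos: "\<And>m x. a m x \<ge> 0" and asum: "\<And>m. m < K \<Longrightarrow> (\<Sum>x\<in>V. a m x) = 1"
    and hA: "\<And>x'. x' \<in> V \<Longrightarrow> (\<Sum>m<K. \<Sum>x\<in>V. a m x * (if g x' x \<noteq> m then 1 else 0)) / K < 1/5"
    and hB: "\<And>x. x \<in> V \<Longrightarrow> (\<Sum>m<K. \<Sum>x'\<in>V. a m x' * (if g x' x \<noteq> m then 1 else 0)) / K < 1/5"
  shows False
proof -
  define I where "I = (\<lambda>m x' x. if g x' x \<noteq> m then (1::real) else 0)"
  define SA where "SA = (\<Sum>m'<K. \<Sum>x'\<in>V. a m' x' * (\<Sum>m<K. \<Sum>x\<in>V. a m x * I m x' x))"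
  define SB where "SB = (\<Sum>m<K. \<Sum>x\<in>V. a m x * (\<Sum>m'<K. \<Sum>x'\<in>V. a m' x' * I m' x' x))"
  have Kp: "real K > 0" using K2 by simp
  have "SA \<le> (\<Sum>m'<K. \<Sum>x'\<in>V. a m' x' * (real K / 5))"
    unfolding SA_def
  proof (intro sum_mono mult_left_mono apos)
    fix m' x' assume "x' \<in> V"
    from hA[OF this] Kp show "(\<Sum>m<K. \<Sum>x\<in>V. a m x * I m x' x) \<le> real K / 5"
      unfolding I_def by (simp add: field_simps)
  qed
  also have "\<dots> = (\<Sum>m'<K. (\<Sum>x'\<in>V. a m' x') * (real K / 5))" by (intro sum.cong refl) (rule sum_distrib_right[symmetric])
  also have "\<dots> = (\<Sum>m'<K. real K / 5)" by (rule sum.cong) (auto simp: asum)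
  also have "\<dots> = real K * real K / 5" by simp
  finally have SAb: "SA \<le> real K * real K / 5" .
  have "SB \<le> (\<Sum>m<K. \<Sum>x\<in>V. a m x * (real K / 5))"
    unfolding SB_def
  proof (intro sum_mono mult_left_mono apos)
    fix m x assume "x \<in> V"
    from hB[OF this] Kp show "(\<Sum>m'<K. \<Sum>x'\<in>V. a m' x' * I m' x' x) \<le> real K / 5"
      unfolding I_def by (simp add: field_simps)
  qed
  also have "\<dots> = (\<Sum>m<K. (\<Sum>x\<in>V. a m x) * (real K / 5))" by (intro sum.cong refl) (rule sum_distrib_right[symmetric])
  also have "\<dots> = (\<Sum>m<K. real K / 5)" by (rule sum.cong) (auto simp: asum)
  also have "\<dots> = real K * real K / 5" by simp
  finally have SBb: "SB \<le> real K * real K / 5" .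
  define T where "T = (\<lambda>m m'. \<Sum>x\<in>V. \<Sum>x'\<in>V. a m x * a m' x' * (I m x' x + I m' x' x))"
  have SA': "SA = (\<Sum>m<K. \<Sum>m'<K. \<Sum>x\<in>V. \<Sum>x'\<in>V. a m x * a m' x' * I m x' x)"
  proof -
    have "SA = (\<Sum>m'<K. \<Sum>x'\<in>V. \<Sum>m<K. \<Sum>x\<in>V. a m x * a m' x' * I m x' x)"
      unfolding SA_def by (simp add: sum_distrib_left mult.assoc mult.left_commute)
    also have "\<dots> = (\<Sum>m'<K. \<Sum>m<K. \<Sum>x'\<in>V. \<Sum>x\<in>V. a m x * a m' x' * I m x' x)"
      by (rule sum.cong[OF refl], rule sum.swap)
    also have "\<dots> = (\<Sum>m<K. \<Sum>m'<K. \<Sum>x'\<in>V. \<Sum>x\<in>V. a m x * a m' x' * I m x' x)"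
      by (rule sum.swap)
    also have "\<dots> = (\<Sum>m<K. \<Sum>m'<K. \<Sum>x\<in>V. \<Sum>x'\<in>V. a m x * a m' x' * I m x' x)"
      by (intro sum.cong refl sum.swap)
    finally show ?thesis .
  qed
  have SB': "SB = (\<Sum>m<K. \<Sum>m'<K. \<Sum>x\<in>V. \<Sum>x'\<in>V. a m x * a m' x' * I m' x' x)"
  proof -
    have "SB = (\<Sum>m<K. \<Sum>x\<in>V. \<Sum>m'<K. \<Sum>x'\<in>V. a m x * a m' x' * I m' x' x)"
      unfolding SB_def by (simp add: sum_distrib_left mult.assoc)
    also have "\<dots> = (\<Sum>m<K. \<Sum>m'<K. \<Sum>x\<in>V. \<Sum>x'\<in>V. a m x * a m' x' * I m' x' x)"
      by (rule sum.cong[OF refl], rule sum.swap)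
    finally show ?thesis .
  qed
  have "SA + SB = (\<Sum>m<K. \<Sum>m'<K. T m m')"
    unfolding SA' SB' T_def by (simp add: sum.distrib[symmetric] distrib_left)
  also have "\<dots> \<ge> (\<Sum>m<K. \<Sum>m'<K. if m \<noteq> m' then 1 else 0)"
  proof (intro sum_mono)
    fix m m' assume m: "m \<in> {..<K}" and m': "m' \<in> {..<K}"
    show "(if m \<noteq> m' then 1 else 0) \<le> T m m'"
    proof (cases "m = m'")
      case True
      have "T m m' \<ge> 0" unfolding T_def I_def by (intro sum_nonneg mult_nonneg_nonneg apos) auto
      thus ?thesis using True by simp
    next
      case False
      have "T m m' \<ge> (\<Sum>x\<in>V. \<Sum>x'\<in>V. a m x * a m' x')"
        unfolding T_def I_def using False apos
        by (intro sum_mono) (auto intro!: mult_nonneg_nonneg)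
      also have "(\<Sum>x\<in>V. \<Sum>x'\<in>V. a m x * a m' x') = 1"
        using m m' by (simp add: sum_distrib_left[symmetric] sum_distrib_right[symmetric] asum)
      finally show ?thesis using False by simp
    qed
  qed
  also have "(\<Sum>m<K. \<Sum>m'<K. if m \<noteq> m' then 1 else (0::real)) = (\<Sum>m<K. real K - 1)"
  proof (rule sum.cong[OF refl])
    fix m assume "m \<in> {..<K}"
    have "(\<Sum>m'<K. if m \<noteq> m' then 1 else (0::real)) = (\<Sum>m'<K. 1 - (if m' = m then 1 else 0))"
      by (rule sum.cong) auto
    also have "\<dots> = real K - 1" using \<open>m \<in> {..<K}\<close> by (simp add: sum_subtractf)
    finally show "(\<Sum>m'<K. if m \<noteq> m' then 1 else (0::real)) = real K - 1" .
  qed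
  finally have "real K * (real K - 1) \<le> SA + SB" by simp
  hence "real K * (real K - 1) \<le> 2 * (real K * real K / 5)" using SAb SBb by linarith
  hence "real K - 1 \<le> 2 * real K / 5" using Kp by (simp add: field_simps)
  thus False using K2 by linarith
qed


lemma prob_sum:
  assumes "finite V" "set_pmf p \<subseteq> V"
  shows "measure_pmf.prob p E = (\<Sum>x\<in>V. pmf p x * (if x \<in> E then 1 else 0))"
proof -
  have "measure_pmf.prob p E = measure_pmf.prob p (E \<inter> set_pmf p)" by (simp add: measure_Int_set_pmf)
  also have "E \<inter> set_pmf p = (E \<inter> V) \<inter> set_pmf p" using assms by auto
  also have "measure_pmf.prob p \<dots> = measure_pmf.prob p (E \<inter> V)" by (simp add: measure_Int_set_pmf)
  also have "\<dots> = sum (pmf p) (E \<inter> V)" using assms by (simp add: measure_measure_pmf_finite)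
  also have "\<dots> = (\<Sum>x\<in>V. if x \<in> E then pmf p x else 0)"
    using sum.inter_restrict[OF assms(1), of "pmf p" E] by (simp add: Int_commute)
  also have "\<dots> = (\<Sum>x\<in>V. pmf p x * (if x \<in> E then 1 else 0))"
    by (rule sum.cong) auto
  finally show ?thesis .
qed

lemma valid_words_finite: "finite {x. valid_word C u q n x}"
proof -
  have eq: "{x. valid_word C u q n x} = {x. \<forall>i t. (i \<in> {0..<C} \<and> t < n \<longrightarrow> x i t < q ^ u i) \<and> (\<not>(i \<in> {0..<C} \<and> t < n) \<longrightarrow> x i t = (\<lambda>_ _. 0::nat) i t)}"
    unfolding valid_word_def by auto
  show ?thesis
  proof (cases "q = 0")
    case True
    have "{x. valid_word C u q n x} \<subseteq> {\<lambda>_ _. 0}"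
    proof
      fix x assume "x \<in> {x. valid_word C u q n x}"
      have "x i t = 0" for i t
      proof (cases "i < C \<and> t < n")
        case True2: True
        hence "x i t < 0 ^ u i" using valid_word_bound[of C u q n x i t] \<open>x \<in> _\<close> True by auto
        thus ?thesis by (cases "u i") auto
      next
        case False
        thus ?thesis using valid_word_zero[of C u q n x i t] \<open>x \<in> _\<close> by auto
      qed
      thus "x \<in> {\<lambda>_ _. 0}" by (auto simp: fun_eq_iff)
    qed
    thus ?thesis using finite_subset by blast
  next
    case False
    have "card {x. valid_word C u q n x} = (\<Prod>i\<in>{0..<C}. (q ^ u i) ^ n)" unfolding eq by (rule card_rows) simp
    also have "\<dots> > 0" using False by (simp add: prod_pos)
    finally show ?thesis by (metis card.infinite less_irrefl)
  qed
qed

lemma valid_lt: "valid_word C u q n x \<Longrightarrow> q > 0 \<Longrightarrow> x i t < q ^ u i"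
  unfolding valid_word_def by (metis zero_less_power)

lemma converse_symm:
  assumes ach: "achievable_ow C u (zrw, zro, zwo) R" and big: "C \<le> 2 * (zrw + zwo)"
  shows "R \<le> 0"
proof (rule ccontr)
  assume "\<not> R \<le> 0"
  hence R0: "R > 0" by simp
  from ach obtain Q where Q: "\<forall>q\<ge>Q. \<exists>N. \<forall>n\<ge>N. good_code_ow C u (zrw,zro,zwo) q n R (1/5)"
    unfolding achievable_ow_def by (meson divide_pos_pos zero_less_numeral zero_less_one)
  define q where "q = max Q 2"
  have q2: "q \<ge> 2" unfolding q_def by simp
  obtain N where N: "\<forall>n\<ge>N. good_code_ow C u (zrw,zro,zwo) q n R (1/5)"
    using Q[rule_format, of q] unfolding q_def by auto
  obtain n0 :: nat where n0: "1 / R < real n0" using reals_Archimedean2 by blast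
  define n where "n = max n0 N"
  have nN: "n \<ge> N" unfolding n_def by simp
  have "real n \<ge> real n0" unfolding n_def by simp
  hence "1 / R < real n" using n0 by linarith
  hence n1: "real n * R \<ge> 1" using R0 by (simp add: field_simps)
  define K where "K = num_msgs q n R"
  have "real K \<ge> real q powr (real n * R)" unfolding K_def by (rule num_msgs_ge)
  also have "real q powr (real n * R) \<ge> real q powr 1" using n1 q2 by (intro powr_mono) auto
  finally have K2: "K \<ge> 2" using q2 by simp
  from N nN obtain enc dec where
    supp: "\<forall>m < K. set_pmf (enc m) \<subseteq> {x. valid_word C u q n x}" and
    err: "\<forall>Zrw Zro Zwo J. admissible_adv C u q n (zrw,zro,zwo) Zrw Zro Zwo J \<longrightarrow>
            err_prob K enc dec (received_ow C n (Zrw \<union> Zwo) J) < 1/5"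
    unfolding good_code_ow_def K_def by blast
  define V where "V = {x. valid_word C u q n x}"
  have fV: "finite V" unfolding V_def by (rule valid_words_finite)
  define A where "A = {0..<C div 2}"
  define B where "B = {C div 2..<C}"
  have cA: "card A \<le> zrw + zwo" unfolding A_def using big by simp
  have cB: "card B \<le> zrw + zwo" unfolding B_def using big by simp
  obtain XA YA where XYA: "A = XA \<union> YA" "XA \<inter> YA = {}" "card XA \<le> zrw" "card YA \<le> zwo"
    using split_set[of A zrw zwo] cA unfolding A_def by auto
  obtain XB YB where XYB: "B = XB \<union> YB" "XB \<inter> YB = {}" "card XB \<le> zrw" "card YB \<le> zwo"
    using split_set[of B zrw zwo] cB unfolding B_def by auto
  have AC: "A \<subseteq> {0..<C}" "B \<subseteq> {0..<C}" unfolding A_def B_def by auto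
  have sA: "XA \<subseteq> {0..<C}" "YA \<subseteq> {0..<C}" using XYA(1) AC by blast+
  have sB: "XB \<subseteq> {0..<C}" "YB \<subseteq> {0..<C}" using XYB(1) AC by blast+
  define mix where "mix = (\<lambda>(x'::netword) (x::netword) i t. if i < C \<and> t < n then (if i \<in> A then x' i t else x i t) else 0)"
  define a where "a = (\<lambda>m x. pmf (enc m) x)"
  define g where "g = (\<lambda>x' x. dec (mix x' x))"
  have errsum: "err_prob K enc dec chan = (\<Sum>m<K. \<Sum>x\<in>V. a m x * (if dec (chan x) \<noteq> m then 1 else 0)) / K" for chan
    unfolding err_prob_def a_def using prob_sum[OF fV] supp unfolding V_def[symmetric]
    by (intro arg_cong[where f = "\<lambda>s. s / real K"] sum.cong refl) auto
  show False
  proof (rule symm_core[OF fV K2, of a g])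
    show "\<And>m x. 0 \<le> a m x" unfolding a_def by simp
    show "\<And>m. m < K \<Longrightarrow> (\<Sum>x\<in>V. a m x) = 1" unfolding a_def using supp fV V_def
      by (intro sum_pmf_eq_1) auto
  next
    fix x' assume x': "x' \<in> V"
    define J where "J = (\<lambda>(i::nat) (t::nat) (y::netword). x' i t)"
    have adm: "admissible_adv C u q n (zrw,zro,zwo) XA {} YA J"
      unfolding admissible_adv_def J_def using XYA(2-4) sA x' q2 valid_lt unfolding V_def by auto
    have "err_prob K enc dec (received_ow C n A J) < 1/5" using err adm XYA(1) by auto
    moreover have "received_ow C n A J = mix x'" unfolding received_ow_def mix_def J_def by (auto simp: fun_eq_iff)
    ultimately show "(\<Sum>m<K. \<Sum>x\<in>V. a m x * (if g x' x \<noteq> m then 1 else 0)) / K < 1/5"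
      unfolding errsum g_def by simp
  next
    fix x assume x: "x \<in> V"
    define J where "J = (\<lambda>(i::nat) (t::nat) (y::netword). x i t)"
    have adm: "admissible_adv C u q n (zrw,zro,zwo) XB {} YB J"
      unfolding admissible_adv_def J_def using XYB(2-4) sB x q2 valid_lt unfolding V_def by auto
    have "err_prob K enc dec (received_ow C n B J) < 1/5" using err adm XYB(1) by auto
    moreover have "received_ow C n B J = (\<lambda>x'. mix x' x)"
      unfolding received_ow_def mix_def J_def A_def B_def by (auto simp: fun_eq_iff)
    ultimately show "(\<Sum>m<K. \<Sum>x'\<in>V. a m x' * (if g x' x \<noteq> m then 1 else 0)) / K < 1/5"
      unfolding errsum g_def by simp
  qed
qed

lemma digsum_lt:
  fixes f :: "nat \<Rightarrow> nat"
  assumes "\<forall>s<L. f s < b"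
  shows "(\<Sum>s<L. f s * b^s) < b^L"
  using assms
proof (induction L)
  case 0 thus ?case by simp
next
  case (Suc L)
  hence IH: "(\<Sum>s<L. f s * b^s) < b^L" and fL: "f L < b" by auto
  have "(\<Sum>s<Suc L. f s * b^s) = (\<Sum>s<L. f s * b^s) + f L * b^L" by simp
  also have "\<dots> < b^L + f L * b^L" using IH by simp
  also have "\<dots> = (f L + 1) * b^L" by simp
  also have "\<dots> \<le> b * b^L" using fL by (intro mult_right_mono) auto
  finally show ?case by simp
qed

lemma divmod_aux:
  fixes a x B :: nat
  assumes "a < B"
  shows "(a + x * B) div B = x" "(a + x * B) mod B = a"
  using assms by auto

lemma digsum_inj:
  fixes f g :: "nat \<Rightarrow> nat"
  assumes "\<forall>s<L. f s < b" "\<forall>s<L. g s < b" "(\<Sum>s<L. f s * b^s) = (\<Sum>s<L. g s * b^s)"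
  shows "\<forall>s<L. f s = g s"
  using assms
proof (induction L)
  case 0 thus ?case by simp
next
  case (Suc L)
  have fl: "(\<Sum>s<L. f s * b^s) < b^L" using Suc.prems(1) by (intro digsum_lt) auto
  have gl: "(\<Sum>s<L. g s * b^s) < b^L" using Suc.prems(2) by (intro digsum_lt) auto
  have eq: "(\<Sum>s<L. f s * b^s) + f L * b^L = (\<Sum>s<L. g s * b^s) + g L * b^L" using Suc.prems(3) by simp
  have "(\<Sum>s<L. f s * b^s) + f L * b^L = (\<Sum>s<L. g s * b^s) + g L * b^L" by (rule eq)
  hence "((\<Sum>s<L. f s * b^s) + f L * b^L) div b^L = ((\<Sum>s<L. g s * b^s) + g L * b^L) div b^L"
    and m: "((\<Sum>s<L. f s * b^s) + f L * b^L) mod b^L = ((\<Sum>s<L. g s * b^s) + g L * b^L) mod b^L"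
    by (rule arg_cong)+
  hence 1: "f L = g L" by (simp only: divmod_aux(1)[OF fl] divmod_aux(1)[OF gl])
  from m have "(\<Sum>s<L. f s * b^s) = (\<Sum>s<L. g s * b^s)"
    by (simp only: divmod_aux(2)[OF fl] divmod_aux(2)[OF gl])
  hence "\<forall>s<L. f s = g s" using Suc.prems(1,2) by (intro Suc.IH) auto
  with 1 show ?case by (auto simp: less_Suc_eq)
qed

definition digit :: "nat \<Rightarrow> nat \<Rightarrow> nat \<Rightarrow> nat" where
  "digit q s h = h div q ^ s mod q"

lemma digit_recon: "(\<Sum>s<L. digit q s h * q^s) = h mod q ^ L"
proof (induction L)
  case 0 thus ?case by simp
next
  case (Suc L)
  have "(\<Sum>s<Suc L. digit q s h * q^s) = h mod q ^ L + digit q L h * q^L" using Suc by simp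
  also have "\<dots> = h mod (q^L * q)" unfolding mod_mult2_eq[of h "q^L" q] digit_def by simp
  finally show ?case by (simp add: mult.commute)
qed

lemma digit_inj:
  assumes "h < q ^ L" "h' < q ^ L" "\<forall>s<L. digit q s h = digit q s h'"
  shows "h = h'"
proof -
  have "(\<Sum>s<L. digit q s h * q^s) = (\<Sum>s<L. digit q s h' * q^s)" using assms(3) by simp
  thus ?thesis using assms(1,2) by (simp add: digit_recon)
qed

lemma digit_lt: "q > 0 \<Longrightarrow> digit q s h < q"
  unfolding digit_def by simp

definition chunkval :: "nat \<Rightarrow> nat \<Rightarrow> (nat \<Rightarrow> nat) \<Rightarrow> nat \<Rightarrow> nat" where
  "chunkval b c v j = (\<Sum>s<c. v (j * c + s) * b ^ s)"

definition hsh :: "nat \<Rightarrow> nat \<Rightarrow> nat \<Rightarrow> nat \<Rightarrow> (nat \<Rightarrow> nat) \<Rightarrow> nat" where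
  "hsh b c k r v = (\<Sum>j<k. chunkval b c v j * r ^ j)"

lemma geom_lt: "(q::nat) \<ge> 2 \<Longrightarrow> (\<Sum>j<k. q ^ j) < q ^ k"
proof (induction k)
  case 0 thus ?case by simp
next
  case (Suc k)
  hence "(\<Sum>j<Suc k. q ^ j) < q^k + q^k" by simp
  also have "\<dots> = 2 * q^k" by simp
  also have "\<dots> \<le> q * q^k" using Suc.prems by (intro mult_right_mono) auto
  finally show ?case by simp
qed

lemma chunkval_lt:
  assumes "\<forall>t<k*c. v t < b" "j < k"
  shows "chunkval b c v j < b ^ c"
  unfolding chunkval_def
proof (rule digsum_lt, intro allI impI)
  fix s assume "s < c"
  have "j * c + s < k * c"
  proof -
    have "j * c + s < j * c + c" using \<open>s < c\<close> by simp
    also have "\<dots> = Suc j * c" by simp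
    also have "\<dots> \<le> k * c" using assms(2) by (intro mult_right_mono) auto
    finally show ?thesis .
  qed
  thus "v (j * c + s) < b" using assms(1) by auto
qed

lemma hsh_lt:
  assumes "\<forall>t<k*c. v t < b" "r < q" "q \<ge> 2" "b > 0"
  shows "hsh b c k r v < b ^ c * q ^ k"
proof (cases "k = 0")
  case True thus ?thesis using assms by (simp add: hsh_def)
next
  case False
  have "hsh b c k r v \<le> (\<Sum>j<k. (b^c - 1) * q ^ j)"
    unfolding hsh_def
  proof (intro sum_mono mult_le_mono)
    fix j assume "j \<in> {..<k}"
    thus "chunkval b c v j \<le> b^c - 1" using chunkval_lt[OF assms(1)] by fastforce
    show "r ^ j \<le> q ^ j" using assms(2) by (intro power_mono) auto
  qed
  also have "\<dots> = (b^c - 1) * (\<Sum>j<k. q ^ j)" by (simp add: sum_distrib_left)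
  also have "\<dots> \<le> (b^c - 1) * q ^ k" using geom_lt[OF assms(3), of k] by (intro mult_left_mono) auto
  also have "\<dots> < b^c * q^k" using assms by simp
  finally show ?thesis .
qed


lemma pos_lt: "j < k \<Longrightarrow> s < (c::nat) \<Longrightarrow> j * c + s < k * c"
proof -
  assume "j < k" "s < c"
  have "j * c + s < j * c + c" using \<open>s < c\<close> by simp
  also have "\<dots> = Suc j * c" by simp
  also have "\<dots> \<le> k * c" using \<open>j < k\<close> by (intro mult_right_mono) auto
  finally show ?thesis .
qed

lemma hsh_collision:
  assumes bx: "\<forall>t<k*c. x t < b" and by': "\<forall>t<k*c. y t < b" and ne: "\<exists>t<k*c. x t \<noteq> y t"
  shows "finite {r::nat. hsh b c k r x = hsh b c k r y} \<and> card {r::nat. hsh b c k r x = hsh b c k r y} \<le> k"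
proof -
  obtain t0 where t0: "t0 < k * c" "x t0 \<noteq> y t0" using ne by blast
  have c0: "c > 0" using t0(1) by (cases c) auto
  define j0 where "j0 = t0 div c"
  define s0 where "s0 = t0 mod c"
  have j0k: "j0 < k" unfolding j0_def using t0(1) c0 by (simp add: div_less_iff_less_mult)
  have s0c: "s0 < c" unfolding s0_def using c0 by simp
  have t0eq: "t0 = j0 * c + s0" unfolding j0_def s0_def by simp
  define cx where "cx = (\<lambda>j. int (chunkval b c x j))"
  define cy where "cy = (\<lambda>j. int (chunkval b c y j))"
  have cne: "cx j0 \<noteq> cy j0"
  proof
    assume "cx j0 = cy j0"
    hence "chunkval b c x j0 = chunkval b c y j0" unfolding cx_def cy_def by simp
    hence eq: "(\<Sum>s<c. x (j0 * c + s) * b ^ s) = (\<Sum>s<c. y (j0 * c + s) * b ^ s)"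
      unfolding chunkval_def .
    have "\<forall>s<c. x (j0 * c + s) = y (j0 * c + s)"
      by (rule digsum_inj[OF _ _ eq]) (use bx by' pos_lt[OF j0k] in auto)
    hence "x t0 = y t0" using s0c t0eq by auto
    thus False using t0 by simp
  qed
  define p :: "int poly" where "p = (\<Sum>j<k. monom (cx j - cy j) j)"
  have coeffp: "coeff p i = (if i < k then cx i - cy i else 0)" for i
    unfolding p_def coeff_sum coeff_monom by (auto simp: sum.delta)
  have p0: "p \<noteq> 0"
  proof
    assume "p = 0"
    hence "coeff p j0 = 0" by simp
    thus False using coeffp[of j0] j0k cne by simp
  qed
  have dp: "degree p \<le> k" by (rule degree_le) (auto simp: coeffp)
  have polyp: "poly p (int r) = int (hsh b c k r x) - int (hsh b c k r y)" for r
    unfolding p_def poly_sum poly_monom hsh_def cx_def cy_def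
    by (simp add: of_nat_sum sum_subtractf algebra_simps)
  have sub: "int ` {r. hsh b c k r x = hsh b c k r y} \<subseteq> {z. poly p z = 0}"
    using polyp by auto
  have fin: "finite {z. poly p z = 0}" using poly_roots_finite[OF p0] .
  have "finite (int ` {r. hsh b c k r x = hsh b c k r y})" using finite_subset[OF sub fin] .
  hence f1: "finite {r. hsh b c k r x = hsh b c k r y}" by (simp add: finite_image_iff)
  have "card {r. hsh b c k r x = hsh b c k r y} = card (int ` {r. hsh b c k r x = hsh b c k r y})"
    by (simp add: card_image)
  also have "\<dots> \<le> card {z. poly p z = 0}" using card_mono[OF fin sub] .
  also have "\<dots> \<le> degree p" using card_poly_roots_bound[OF p0] .
  finally show ?thesis using f1 dp by simp
qed

lemma greedy:
  fixes W :: "'a set" and close :: "'a \<Rightarrow> 'a \<Rightarrow> bool"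
  assumes fW: "finite W" and nb: "\<forall>c\<in>W. card {x\<in>W. close c x} \<le> Nb"
    and sym: "\<And>a b. close a b = close b a" and big: "K0 * Nb < card W"
  shows "\<exists>cw. (\<forall>m<K0. cw m \<in> W) \<and> (\<forall>m m'. m < K0 \<longrightarrow> m' < K0 \<longrightarrow> m \<noteq> m' \<longrightarrow> \<not> close (cw m) (cw m'))"
  using big
proof (induction K0)
  case 0 thus ?case by auto
next
  case (Suc K0)
  have "K0 * Nb \<le> Suc K0 * Nb" by simp
  hence "K0 * Nb < card W" using Suc.prems by linarith
  then obtain cw where cw: "\<forall>m<K0. cw m \<in> W" "\<forall>m m'. m < K0 \<longrightarrow> m' < K0 \<longrightarrow> m \<noteq> m' \<longrightarrow> \<not> close (cw m) (cw m')"
    using Suc.IH by blast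
  define Bad where "Bad = (\<Union>m<K0. {x\<in>W. close (cw m) x})"
  have "card Bad \<le> (\<Sum>m<K0. card {x\<in>W. close (cw m) x})" unfolding Bad_def by (rule card_UN_le) simp
  also have "\<dots> \<le> (\<Sum>m<K0. Nb)" using cw(1) nb by (intro sum_mono) auto
  also have "\<dots> = K0 * Nb" by simp
  also have "\<dots> < card W" using Suc.prems by simp
  finally have "card Bad < card W" .
  moreover have "Bad \<subseteq> W" unfolding Bad_def by auto
  ultimately have "W - Bad \<noteq> {}"
  proof -
    assume a: "card Bad < card W" "Bad \<subseteq> W"
    show "W - Bad \<noteq> {}"
    proof
      assume "W - Bad = {}"
      hence "W \<subseteq> Bad" by blast
      hence "card W \<le> card Bad" using fW a(2) finite_subset card_mono by metis
      thus False using a(1) by simp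
    qed
  qed
  then obtain x where x: "x \<in> W" "x \<notin> Bad" by blast
  define cw' where "cw' = cw(K0 := x)"
  have "\<forall>m<Suc K0. cw' m \<in> W" using cw(1) x(1) unfolding cw'_def by (auto simp: less_Suc_eq)
  moreover have "\<forall>m m'. m < Suc K0 \<longrightarrow> m' < Suc K0 \<longrightarrow> m \<noteq> m' \<longrightarrow> \<not> close (cw' m) (cw' m')"
  proof (intro allI impI)
    fix m m' assume m: "m < Suc K0" "m' < Suc K0" "m \<noteq> m'"
    have xb: "\<And>m. m < K0 \<Longrightarrow> \<not> close (cw m) x" using x unfolding Bad_def by auto
    show "\<not> close (cw' m) (cw' m')"
    proof (cases "m = K0")
      case True
      hence "m' < K0" using m by auto
      hence "\<not> close (cw m') x" using xb by blast
      hence "\<not> close x (cw m')" using sym[of x "cw m'"] by simp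
      moreover have "cw' m = x" "cw' m' = cw m'" using True \<open>m' < K0\<close> unfolding cw'_def by auto
      ultimately show ?thesis by simp
    next
      case False
      hence mk: "m < K0" using m by auto
      show ?thesis
      proof (cases "m' = K0")
        case True thus ?thesis using mk xb[of m] False unfolding cw'_def by auto
      next
        case False
        hence "m' < K0" using m by auto
        thus ?thesis using mk cw(2) m(3) \<open>m \<noteq> K0\<close> False unfolding cw'_def by auto
      qed
    qed
  qed
  ultimately show ?case by blast
qed

definition closew :: "nat \<Rightarrow> nat \<Rightarrow> nat \<Rightarrow> netword \<Rightarrow> netword \<Rightarrow> bool" where
  "closew C D w x y \<longleftrightarrow> card {i. i < C \<and> (\<exists>t<D. x i t \<noteq> y i t)} \<le> w"

lemma closew_sym: "closew C D w x y = closew C D w y x"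
proof -
  have "{i. i < C \<and> (\<exists>t<D. x i t \<noteq> y i t)} = {i. i < C \<and> (\<exists>t<D. y i t \<noteq> x i t)}" by auto
  thus ?thesis unfolding closew_def by simp
qed


lemma card_Ag:
  fixes S :: "nat set" and u :: "nat \<Rightarrow> nat" and d :: "nat \<Rightarrow> nat \<Rightarrow> nat"
  assumes "q > 0" "finite S"
  shows "card {x. \<forall>i t. (i \<in> S \<and> t < D \<longrightarrow> x i t < q ^ u i) \<and> (\<not>(i \<in> S \<and> t < D) \<longrightarrow> x i t = d i t)}
         = q ^ (D * (\<Sum>i\<in>S. u i))"
proof -
  have "card {x. \<forall>i t. (i \<in> S \<and> t < D \<longrightarrow> x i t < q ^ u i) \<and> (\<not>(i \<in> S \<and> t < D) \<longrightarrow> x i t = d i t)}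
        = (\<Prod>i\<in>S. (q ^ u i) ^ D)" using card_rows[where F=S and D=D and b="\<lambda>i. q ^ u i" and d=d] assms(2) by simp
  also have "\<dots> = (\<Prod>i\<in>S. q ^ (u i * D))" by (simp add: power_mult)
  also have "\<dots> = q ^ (\<Sum>i\<in>S. u i * D)" by (simp add: power_sum)
  also have "(\<Sum>i\<in>S. u i * D) = D * (\<Sum>i\<in>S. u i)" by (simp add: sum_distrib_left mult.commute)
  finally show ?thesis .
qed

lemma nbhd_bound:
  assumes q: "q > 0" and w: "w \<le> C" and c: "valid_word C u q D c"
  shows "card {x \<in> {x. valid_word C u q D x}. closew C D w c x} \<le> 2^C * q^(D * U_max C u w)"
proof -
  define SS where "SS = {S. S \<subseteq> {0..<C} \<and> card S \<le> w}"
  define Ag where "Ag = (\<lambda>S. {x. \<forall>i t. (i \<in> S \<and> t < D \<longrightarrow> x i t < q ^ u i) \<and> (\<not>(i \<in> S \<and> t < D) \<longrightarrow> x i t = (if i < C \<and> t < D then c i t else 0))})"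
  have SSsub: "SS \<subseteq> Pow {0..<C}" unfolding SS_def by auto
  have fSS: "finite SS" using finite_subset[OF SSsub] by simp
  have cSS: "card SS \<le> 2^C" using card_mono[OF _ SSsub] by (simp add: card_Pow)
  have cAg: "card (Ag S) \<le> q^(D * U_max C u w)" if "S \<in> SS" for S
  proof -
    have S: "S \<subseteq> {0..<C}" "card S \<le> w" using that unfolding SS_def by auto
    have fS: "finite S" using S(1) finite_subset by blast
    have "card (Ag S) = q ^ (D * (\<Sum>i\<in>S. u i))" unfolding Ag_def by (rule card_Ag[OF q fS])
    also have "\<dots> \<le> q^(D * U_max C u w)" using q umax_ge[OF S w] by (intro power_increasing) auto
    finally show ?thesis .
  qed
  have fAg: "finite (Ag S)" if "S \<in> SS" for S
  proof -
    have S: "S \<subseteq> {0..<C}" using that unfolding SS_def by auto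
    have fS: "finite S" using S(1) finite_subset by blast
    have "card (Ag S) = q ^ (D * (\<Sum>i\<in>S. u i))" unfolding Ag_def by (rule card_Ag[OF q fS])
    hence "card (Ag S) \<noteq> 0" using q by simp
    thus ?thesis by (meson card.infinite)
  qed
  have sub: "{x \<in> {x. valid_word C u q D x}. closew C D w c x} \<subseteq> (\<Union>S\<in>SS. Ag S)"
  proof
    fix x assume "x \<in> {x \<in> {x. valid_word C u q D x}. closew C D w c x}"
    hence vx: "valid_word C u q D x" and cl: "closew C D w c x" by auto
    define S where "S = {i. i < C \<and> (\<exists>t<D. c i t \<noteq> x i t)}"
    have "S \<in> SS" using cl unfolding SS_def S_def closew_def by auto
    moreover have "x \<in> Ag S"
      unfolding Ag_def S_def using vx valid_word_bound[OF vx] valid_word_zero[OF vx] by auto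
    ultimately show "x \<in> (\<Union>S\<in>SS. Ag S)" by blast
  qed
  have "card {x \<in> {x. valid_word C u q D x}. closew C D w c x} \<le> card (\<Union>S\<in>SS. Ag S)"
    using fSS fAg by (intro card_mono[OF _ sub]) auto
  also have "\<dots> \<le> (\<Sum>S\<in>SS. card (Ag S))" by (rule card_UN_le[OF fSS])
  also have "\<dots> \<le> (\<Sum>S\<in>SS. q^(D * U_max C u w))" using cAg by (intro sum_mono) auto
  also have "\<dots> = card SS * q^(D * U_max C u w)" by simp
  also have "\<dots> \<le> 2^C * q^(D * U_max C u w)" using cSS by (intro mult_right_mono) auto
  finally show ?thesis .
qed

lemma card_valid: "q > 0 \<Longrightarrow> card {x. valid_word C u q D x} = q ^ (D * total_cap C u)"
proof -
  assume q: "q > 0"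
  have eq: "{x. valid_word C u q D x} = {x. \<forall>i t. (i \<in> {0..<C} \<and> t < D \<longrightarrow> x i t < q ^ u i) \<and> (\<not>(i \<in> {0..<C} \<and> t < D) \<longrightarrow> x i t = (\<lambda>_ _. 0::nat) i t)}"
    unfolding valid_word_def by auto
  show ?thesis unfolding eq total_cap_def atLeast0LessThan[symmetric] by (rule card_Ag[OF q]) simp
qed

lemma code_exists:
  assumes q: "q > 0" and w: "w \<le> C" and big: "K0 * (2^C * q^(D * U_max C u w)) < q^(D * total_cap C u)"
  shows "\<exists>cw. (\<forall>m<K0. valid_word C u q D (cw m)) \<and>
              (\<forall>m m'. m < K0 \<longrightarrow> m' < K0 \<longrightarrow> m \<noteq> m' \<longrightarrow> w < card {i. i < C \<and> (\<exists>t<D. cw m i t \<noteq> cw m' i t)})"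
proof -
  have "\<exists>cw. (\<forall>m<K0. cw m \<in> {x. valid_word C u q D x}) \<and> (\<forall>m m'. m < K0 \<longrightarrow> m' < K0 \<longrightarrow> m \<noteq> m' \<longrightarrow> \<not> closew C D w (cw m) (cw m'))"
  proof (rule greedy[OF valid_words_finite])
    show "\<forall>c\<in>{x. valid_word C u q D x}. card {x \<in> {x. valid_word C u q D x}. closew C D w c x} \<le> 2^C * q^(D * U_max C u w)"
      using nbhd_bound[OF q w] by auto
    show "\<And>a b. closew C D w a b = closew C D w b a" by (rule closew_sym)
    show "K0 * (2^C * q^(D * U_max C u w)) < card {x. valid_word C u q D x}" using big card_valid[OF q] by simp
  qed
  thus ?thesis unfolding closew_def by (auto simp: not_le)
qed

definition wrd :: "nat \<Rightarrow> nat \<Rightarrow> nat \<Rightarrow> nat \<Rightarrow> nat \<Rightarrow> nat \<Rightarrow> nat \<Rightarrow> nat \<Rightarrow> (nat \<Rightarrow> netword) \<Rightarrow> nat \<Rightarrow> (nat \<Rightarrow> nat) \<Rightarrow> netword" where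
  "wrd C n q b c k D Lh cw m r = (\<lambda>i t. if i < C \<and> t < n then
      (if t < D then cw m i t else if t = D then r i else
        (if (t - Suc D) div Lh < C then digit q ((t - Suc D) mod Lh) (hsh b c k (r i) (cw m ((t - Suc D) div Lh))) else 0))
      else 0)"

definition supp_ok :: "nat \<Rightarrow> nat \<Rightarrow> nat \<Rightarrow> nat \<Rightarrow> nat \<Rightarrow> nat \<Rightarrow> netword \<Rightarrow> nat \<Rightarrow> nat \<Rightarrow> bool" where
  "supp_ok q b c k D Lh y j i \<longleftrightarrow> (\<forall>s<Lh. y j (Suc D + i * Lh + s) = digit q s (hsh b c k (y j D) (y i)))"

definition Acc :: "nat \<Rightarrow> nat \<Rightarrow> nat \<Rightarrow> nat \<Rightarrow> nat \<Rightarrow> nat \<Rightarrow> nat \<Rightarrow> nat \<Rightarrow> netword \<Rightarrow> nat set" where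
  "Acc C w q b c k D Lh y = {i. i < C \<and> w < card {j. j < C \<and> supp_ok q b c k D Lh y j i}}"

definition decw :: "nat \<Rightarrow> nat \<Rightarrow> nat \<Rightarrow> nat \<Rightarrow> nat \<Rightarrow> nat \<Rightarrow> nat \<Rightarrow> nat \<Rightarrow> nat \<Rightarrow> (nat \<Rightarrow> netword) \<Rightarrow> netword \<Rightarrow> nat" where
  "decw K C w q b c k D Lh cw y =
     (if \<exists>m. m < K \<and> (\<forall>i\<in>Acc C w q b c k D Lh y. \<forall>t<D. cw m i t = y i t)
      then (SOME m. m < K \<and> (\<forall>i\<in>Acc C w q b c k D Lh y. \<forall>t<D. cw m i t = y i t)) else 0)"

lemma hsh_cong: "\<forall>t<k*c. v t = v' t \<Longrightarrow> hsh b c k r v = hsh b c k r v'"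
  unfolding hsh_def chunkval_def
  by (intro sum.cong refl arg_cong2[where f = "(*)"] refl) (auto intro!: sum.cong pos_lt)

lemma wrd_data: "i < C \<Longrightarrow> t < D \<Longrightarrow> D \<le> n \<Longrightarrow> wrd C n q b c k D Lh cw m r i t = cw m i t"
  unfolding wrd_def by auto

lemma wrd_key: "i < C \<Longrightarrow> D < n \<Longrightarrow> wrd C n q b c k D Lh cw m r i D = r i"
  unfolding wrd_def by auto

lemma wrd_hash:
  assumes "i < C" "i' < C" "s < Lh" "Suc D + C * Lh \<le> n"
  shows "wrd C n q b c k D Lh cw m r i (Suc D + i' * Lh + s) = digit q s (hsh b c k (r i) (cw m i'))"
proof -
  have lt: "i' * Lh + s < C * Lh" using pos_lt[OF assms(2,3)] .
  have dv: "(i' * Lh + s) div Lh = i'" "(i' * Lh + s) mod Lh = s" using assms(3) by auto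
  show ?thesis unfolding wrd_def using assms lt dv by auto
qed


lemma decode_correct:
  assumes q2: "q \<ge> 2" and bpos: "b > 0" and Dkc: "D = k * c" and Lhb: "b ^ c * q ^ k \<le> q ^ Lh"
    and len: "Suc D + C * Lh \<le> n"
    and Zw: "Zw \<subseteq> {0..<C}" "card Zw \<le> w" "2 * w < C"
    and mK: "m < K"
    and cwv: "\<forall>m<K. \<forall>i<C. \<forall>t<D. cw m i t < b"
    and dist: "\<forall>m m'. m < K \<longrightarrow> m' < K \<longrightarrow> m \<noteq> m' \<longrightarrow> w < card {i. i < C \<and> (\<exists>t<D. cw m i t \<noteq> cw m' i t)}"
    and rk: "\<forall>j<C. r j < q"
    and honest: "\<forall>i<C. i \<notin> Zw \<longrightarrow> (\<forall>t<n. y i t = wrd C n q b c k D Lh cw m r i t)"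
    and yb: "\<forall>i<C. \<forall>t<D. y i t < b"
    and G: "\<forall>i\<in>Zw. \<forall>j<C. j \<notin> Zw \<longrightarrow> (\<exists>t<D. y i t \<noteq> cw m i t) \<longrightarrow> hsh b c k (r j) (y i) \<noteq> hsh b c k (r j) (cw m i)"
  shows "decw K C w q b c k D Lh cw y = m"
proof -
  define H where "H = {0..<C} - Zw"
  have fZ: "finite Zw" using Zw(1) finite_subset by blast
  have cH: "card H = C - card Zw" unfolding H_def using Zw(1) fZ by (simp add: card_Diff_subset)
  hence cHw: "w < card H" using Zw by linarith
  have Dn: "D < n" using len by simp
  have hdata: "\<forall>t<D. y i t = cw m i t" if "i \<in> H" for i
    using that honest wrd_data[of i C _ D n q b c k Lh cw m r] Dn unfolding H_def by auto
  have hkey: "y j D = r j" if "j \<in> H" for j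
    using that honest wrd_key[of j C D n q b c k Lh cw m r] Dn unfolding H_def by auto
  have hhash: "y j (Suc D + i * Lh + s) = digit q s (hsh b c k (r j) (cw m i))" if "j \<in> H" "i < C" "s < Lh" for j i s
  proof -
    have "i * Lh + s < C * Lh" using pos_lt[OF that(2,3)] .
    hence "Suc D + i * Lh + s < n" using len by linarith
    thus ?thesis using that honest wrd_hash[OF _ that(2,3) len, of j q b c k cw m r] unfolding H_def by auto
  qed
  have supp_iff: "supp_ok q b c k D Lh y j i \<longleftrightarrow> (\<forall>s<Lh. digit q s (hsh b c k (r j) (cw m i)) = digit q s (hsh b c k (r j) (y i)))"
    if "j \<in> H" "i < C" for j i
    unfolding supp_ok_def using hhash[OF that] hkey[OF that(1)] by auto
  have cwb: "\<forall>t<k*c. cw m i t < b" if "i < C" for i using cwv mK that Dkc by auto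
  have ybb: "\<forall>t<k*c. y i t < b" if "i < C" for i using yb that Dkc by auto
  have hl1: "hsh b c k (r j) (cw m i) < q ^ Lh" if "j < C" "i < C" for i j
    using hsh_lt[OF cwb[OF that(2)] _ q2 bpos, of "r j"] rk that Lhb by fastforce
  have hl2: "hsh b c k (r j) (y i) < q ^ Lh" if "j < C" "i < C" for i j
    using hsh_lt[OF ybb[OF that(2)] _ q2 bpos, of "r j"] rk that Lhb by fastforce
  have HA: "H \<subseteq> Acc C w q b c k D Lh y"
  proof
    fix i assume iH: "i \<in> H"
    hence iC: "i < C" unfolding H_def by auto
    have "H \<subseteq> {j. j < C \<and> supp_ok q b c k D Lh y j i}"
    proof
      fix j assume jH: "j \<in> H"
      have "hsh b c k (r j) (y i) = hsh b c k (r j) (cw m i)"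
        using hdata[OF iH] Dkc by (intro hsh_cong) auto
      thus "j \<in> {j. j < C \<and> supp_ok q b c k D Lh y j i}"
        using supp_iff[OF jH iC] jH unfolding H_def by auto
    qed
    hence "card H \<le> card {j. j < C \<and> supp_ok q b c k D Lh y j i}" by (intro card_mono) auto
    thus "i \<in> Acc C w q b c k D Lh y" unfolding Acc_def using cHw iC by auto
  qed
  have accd: "\<forall>t<D. cw m i t = y i t" if "i \<in> Acc C w q b c k D Lh y" for i
  proof (cases "i \<in> H")
    case True thus ?thesis using hdata by auto
  next
    case False
    have iC: "i < C" using that unfolding Acc_def by auto
    hence iZ: "i \<in> Zw" using False unfolding H_def by auto
    define Sp where "Sp = {j. j < C \<and> supp_ok q b c k D Lh y j i}"
    have cSp: "w < card Sp" using that unfolding Acc_def Sp_def by auto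
    have "\<not> Sp \<subseteq> Zw"
    proof
      assume "Sp \<subseteq> Zw"
      hence "card Sp \<le> card Zw" using fZ by (rule card_mono[rotated])
      thus False using cSp Zw(2) by linarith
    qed
    then obtain j where j: "j \<in> Sp" "j \<notin> Zw" by blast
    have jH: "j \<in> H" and jC: "j < C" using j unfolding Sp_def H_def by auto
    have "\<forall>s<Lh. digit q s (hsh b c k (r j) (cw m i)) = digit q s (hsh b c k (r j) (y i))"
      using supp_iff[OF jH iC] j(1) unfolding Sp_def by auto
    hence "hsh b c k (r j) (cw m i) = hsh b c k (r j) (y i)"
      by (intro digit_inj[OF hl1[OF jC iC] hl2[OF jC iC]])
    hence "\<not> (\<exists>t<D. y i t \<noteq> cw m i t)" using G iZ jC j(2) by metis
    thus ?thesis by auto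
  qed
  define P where "P = (\<lambda>m. m < K \<and> (\<forall>i\<in>Acc C w q b c k D Lh y. \<forall>t<D. cw m i t = y i t))"
  have Pm: "P m" unfolding P_def using mK accd by auto
  have uniq: "m' = m" if "P m'" for m'
  proof (rule ccontr)
    assume ne: "m' \<noteq> m"
    define Df where "Df = {i. i < C \<and> (\<exists>t<D. cw m i t \<noteq> cw m' i t)}"
    have "Df \<subseteq> Zw"
    proof
      fix i assume "i \<in> Df"
      then obtain t where t: "i < C" "t < D" "cw m i t \<noteq> cw m' i t" unfolding Df_def by auto
      have "i \<notin> Acc C w q b c k D Lh y" using t that Pm unfolding P_def by auto
      hence "i \<notin> H" using HA by auto
      thus "i \<in> Zw" using t(1) unfolding H_def by auto
    qed
    hence "card Df \<le> w" using fZ Zw(2) card_mono by (metis le_trans)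
    moreover have "w < card Df" using dist mK that ne unfolding Df_def P_def by auto
    ultimately show False by simp
  qed
  have "decw K C w q b c k D Lh cw y = (SOME m. P m)"
    unfolding decw_def P_def[symmetric] using Pm by auto
  also have "\<dots> = m" using Pm uniq by (rule some_equality)
  finally show ?thesis .
qed

definition Keys :: "nat \<Rightarrow> nat \<Rightarrow> (nat \<Rightarrow> nat) set" where
  "Keys C q = {r. \<forall>j. (j < C \<longrightarrow> r j < q) \<and> (\<not> j < C \<longrightarrow> r j = 0)}"

lemma card_keys: "card (Keys C q) = q ^ C"
proof -
  have "Keys C q = {r. (\<forall>p\<in>{..<C}. r p \<in> {..<q}) \<and> (\<forall>p. p \<notin> {..<C} \<longrightarrow> r p = (\<lambda>_. 0) p)}"
    unfolding Keys_def by auto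
  also have "card \<dots> = (\<Prod>p\<in>{..<C}. card {..<q})" by (rule card_funs) auto
  finally show ?thesis by simp
qed

lemma keys_ne: "(\<lambda>_. 0) \<in> Keys C q \<or> q = 0"
  unfolding Keys_def by auto

lemma keys_dflt: "Keys C q = PiE_dflt {..<C} 0 (\<lambda>_. {..<q})"
  unfolding Keys_def PiE_dflt_def by auto

lemma finite_keys: "finite (Keys C q)"
  unfolding keys_dflt by (rule finite_PiE_dflt) auto

lemma card_keys_bad:
  assumes "j < C"
  shows "card {r \<in> Keys C q. r j \<in> Rt} \<le> card (Rt \<inter> {..<q}) * q ^ (C - 1)"
proof -
  define B where "B = (\<lambda>p. if p = j then Rt \<inter> {..<q} else {..<q})"
  have "{r \<in> Keys C q. r j \<in> Rt} = {r. (\<forall>p\<in>{..<C}. r p \<in> B p) \<and> (\<forall>p. p \<notin> {..<C} \<longrightarrow> r p = (\<lambda>_. 0) p)}"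
  proof (intro equalityI subsetI)
    fix r assume "r \<in> {r \<in> Keys C q. r j \<in> Rt}"
    hence r: "\<forall>j. (j < C \<longrightarrow> r j < q) \<and> (\<not> j < C \<longrightarrow> r j = 0)" "r j \<in> Rt" unfolding Keys_def by auto
    have "\<forall>p\<in>{..<C}. r p \<in> B p" unfolding B_def using r by auto
    moreover have "\<forall>p. p \<notin> {..<C} \<longrightarrow> r p = (\<lambda>_. 0) p" using r by auto
    ultimately show "r \<in> {r. (\<forall>p\<in>{..<C}. r p \<in> B p) \<and> (\<forall>p. p \<notin> {..<C} \<longrightarrow> r p = (\<lambda>_. 0) p)}" by blast
  next
    fix r assume "r \<in> {r. (\<forall>p\<in>{..<C}. r p \<in> B p) \<and> (\<forall>p. p \<notin> {..<C} \<longrightarrow> r p = (\<lambda>_. 0) p)}"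
    hence r: "\<forall>p\<in>{..<C}. r p \<in> B p" "\<forall>p. p \<notin> {..<C} \<longrightarrow> r p = 0" by auto
    have "r j \<in> B j" using r(1) assms by auto
    hence "r j \<in> Rt" unfolding B_def by simp
    moreover have "r p < q" if "p < C" for p
    proof -
      have "r p \<in> B p" using r(1) that by auto
      thus ?thesis unfolding B_def by (auto split: if_splits)
    qed
    ultimately show "r \<in> {r \<in> Keys C q. r j \<in> Rt}" unfolding Keys_def using r(2) by auto
  qed
  also have "card \<dots> = (\<Prod>p\<in>{..<C}. card (B p))" by (rule card_funs) (auto simp: B_def)
  also have "\<dots> = card (B j) * (\<Prod>p\<in>{..<C} - {j}. card (B p))" using assms by (intro prod.remove) auto
  also have "(\<Prod>p\<in>{..<C} - {j}. card (B p)) = (\<Prod>p\<in>{..<C} - {j}. q)" by (rule prod.cong) (auto simp: B_def)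
  also have "\<dots> = q ^ (C - 1)" using assms by simp
  finally show ?thesis by (simp add: B_def)
qed


lemma wrd_valid:
  assumes quq: "\<forall>i<C. q \<le> q ^ u i" and q: "q > 0" and cv: "valid_word C u q D (cw m)" and r: "r \<in> Keys C q"
  shows "valid_word C u q n (wrd C n q b c k D Lh cw m r)"
  unfolding valid_word_def
proof (intro allI conjI impI)
  fix i t assume it: "i < C \<and> t < n"
  have qp: "q ^ u i > 0" using q by simp
  have ri: "r i < q" using r it unfolding Keys_def by auto
  show "wrd C n q b c k D Lh cw m r i t < q ^ u i"
  proof (cases "t < D")
    case True
    thus ?thesis using it valid_word_bound[OF cv, of i t] unfolding wrd_def by auto
  next
    case False
    have dl: "digit q s h < q ^ u i" for s h using digit_lt[OF q, of s h] quq it by (meson less_le_trans)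
    show ?thesis using False it ri quq qp dl unfolding wrd_def by (auto simp: Let_def)
  qed
next
  fix i t assume "\<not> (i < C \<and> t < n)"
  thus "wrd C n q b c k D Lh cw m r i t = 0" unfolding wrd_def by auto
qed

lemma ach_qn:
  fixes C zrw zro zwo q n k c :: nat and u :: "nat \<Rightarrow> nat" and R \<epsilon> :: real
  assumes hu: "\<forall>i<C. u i > 0" and q2: "q \<ge> 2"
    and len: "Suc (k*c) + C * (total_cap C u * c + k) \<le> n"
    and wC: "2*(zrw+zwo) < C"
    and big: "num_msgs q n R * (2^C * q^(k*c * U_max C u (zrw+zwo))) < q^(k*c * total_cap C u)"
    and small: "real (C*C*k) / real q < \<epsilon>"
  shows "good_code_ow C u (zrw,zro,zwo) q n R \<epsilon>"
proof -
  define w where "w = zrw + zwo"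
  define T where "T = total_cap C u"
  define K where "K = num_msgs q n R"
  define b where "b = q ^ T"
  define D where "D = k * c"
  define Lh where "Lh = T * c + k"
  have q0: "q > 0" using q2 by simp
  have C1: "C \<ge> 1" using wC by simp
  have uT: "u i \<le> T" if "i < C" for i
    unfolding T_def total_cap_def using that by (intro member_le_sum) auto
  have bpos: "b > 0" unfolding b_def using q0 by simp
  have qub: "q ^ u i \<le> b" if "i < C" for i unfolding b_def using uT[OF that] q2 by (intro power_increasing) auto
  have quq: "\<forall>i<C. q \<le> q ^ u i"
  proof (intro allI impI)
    fix i assume "i < C"
    hence "1 \<le> u i" using hu by auto
    hence "q ^ 1 \<le> q ^ u i" using q2 by (intro power_increasing) auto
    thus "q \<le> q ^ u i" by simp
  qed
  have Lhb: "b ^ c * q ^ k \<le> q ^ Lh" unfolding b_def Lh_def by (simp add: power_mult power_add)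
  have len': "Suc D + C * Lh \<le> n" using len unfolding D_def Lh_def T_def .
  have Dn: "D \<le> n" using len' by simp
  have wCC: "w \<le> C" using wC unfolding w_def by simp
  have Kpos: "K > 0" unfolding K_def using q0 by (rule num_msgs_pos)
  obtain cw where cwv: "\<forall>m<K. valid_word C u q D (cw m)"
    and dist: "\<forall>m m'. m < K \<longrightarrow> m' < K \<longrightarrow> m \<noteq> m' \<longrightarrow> w < card {i. i < C \<and> (\<exists>t<D. cw m i t \<noteq> cw m' i t)}"
    using code_exists[OF q0 wCC, of K D u] big unfolding K_def D_def w_def by (auto simp: mult.commute)
  have cwb: "\<forall>m<K. \<forall>i<C. \<forall>t<D. cw m i t < b"
    using cwv valid_word_bound qub by (meson less_le_trans)
  define enc where "enc = (\<lambda>m. map_pmf (wrd C n q b c k D Lh cw m) (pmf_of_set (Keys C q)))"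
  define dec where "dec = decw K C w q b c k D Lh cw"
  have r0K: "(\<lambda>_. 0) \<in> Keys C q" unfolding Keys_def using q0 by auto
  have Kne: "Keys C q \<noteq> {}" using r0K by auto
  have fK: "finite (Keys C q)" by (rule finite_keys)
  have setenc: "set_pmf (enc m) = wrd C n q b c k D Lh cw m ` Keys C q" for m
    unfolding enc_def using Kne fK by simp
  have probenc: "measure_pmf.prob (enc m) E = real (card {r \<in> Keys C q. wrd C n q b c k D Lh cw m r \<in> E}) / real (card (Keys C q))" for m E
  proof -
    have "measure_pmf.prob (enc m) E = measure_pmf.prob (pmf_of_set (Keys C q)) (wrd C n q b c k D Lh cw m -` E)"
      unfolding enc_def by simp
    also have "\<dots> = real (card (Keys C q \<inter> wrd C n q b c k D Lh cw m -` E)) / real (card (Keys C q))"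
      by (rule measure_pmf_of_set[OF Kne fK])
    also have "Keys C q \<inter> wrd C n q b c k D Lh cw m -` E = {r \<in> Keys C q. wrd C n q b c k D Lh cw m r \<in> E}" by auto
    finally show ?thesis .
  qed
  show ?thesis unfolding good_code_ow_def K_def[symmetric]
  proof (rule exI[of _ enc], rule exI[of _ dec], intro conjI allI impI)
    fix m assume "m < K"
    thus "set_pmf (enc m) \<subseteq> {x. valid_word C u q n x}"
      unfolding setenc using wrd_valid[OF quq q0] cwv by auto
  next
    fix Zrw Zro Zwo J assume adm: "admissible_adv C u q n (zrw, zro, zwo) Zrw Zro Zwo J"
    define Zw where "Zw = Zrw \<union> Zwo"
    have Zsub: "Zw \<subseteq> {0..<C}" using adm unfolding admissible_adv_def Zw_def by auto
    have fZ: "finite Zrw" "finite Zwo" using adm unfolding admissible_adv_def by (auto intro: finite_subset)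
    have cZ: "card Zw \<le> w"
    proof -
      have "card Zw \<le> card Zrw + card Zwo" unfolding Zw_def by (rule card_Un_le)
      thus ?thesis using adm unfolding admissible_adv_def w_def by auto
    qed
    have Jb: "\<forall>i t x. J i t x < q ^ u i" using adm unfolding admissible_adv_def by auto
    have causal: "\<forall>i t x x'. (\<forall>j \<in> Zrw \<union> Zro. \<forall>s \<le> t. x j s = x' j s) \<longrightarrow> J i t x = J i t x'"
      using adm unfolding admissible_adv_def by auto
    define chan where "chan = received_ow C n Zw J"
    have perm: "measure_pmf.prob (enc m) {x. dec (chan x) \<noteq> m} \<le> real (C*C*k) / real q" if mK: "m < K" for m
    proof -
      define r0 :: "nat \<Rightarrow> nat" where "r0 = (\<lambda>_. 0)"
      define wm where "wm = wrd C n q b c k D Lh cw m"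
      define Fr where "Fr = (\<lambda>i t. chan (wm r0) i t)"
      have wdat: "wm r i t = wm r0 i t" if "t < D" for r i t
        unfolding wm_def wrd_def using that by auto
      have indep: "chan (wm r) i t = Fr i t" if "t < D" for r i t
      proof -
        have "J i t (wm r) = J i t (wm r0)"
          using causal wdat that by (meson le_less_trans)
        thus ?thesis unfolding Fr_def chan_def received_ow_def using wdat[OF that] by simp
      qed
      define I where "I = {(i,j). i \<in> Zw \<and> j < C \<and> j \<notin> Zw \<and> (\<exists>t<D. Fr i t \<noteq> cw m i t)}"
      define Rt where "Rt = (\<lambda>i. {\<rho>. hsh b c k \<rho> (Fr i) = hsh b c k \<rho> (cw m i)})"
      have sub: "{r \<in> Keys C q. wm r \<in> {x. dec (chan x) \<noteq> m}} \<subseteq> (\<Union>p\<in>I. {r \<in> Keys C q. r (snd p) \<in> Rt (fst p)})"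
      proof
        fix r assume "r \<in> {r \<in> Keys C q. wm r \<in> {x. dec (chan x) \<noteq> m}}"
        hence rK: "r \<in> Keys C q" and dne: "dec (chan (wm r)) \<noteq> m" by auto
        show "r \<in> (\<Union>p\<in>I. {r \<in> Keys C q. r (snd p) \<in> Rt (fst p)})"
        proof (rule ccontr)
          assume nb: "r \<notin> (\<Union>p\<in>I. {r \<in> Keys C q. r (snd p) \<in> Rt (fst p)})"
          define y where "y = chan (wm r)"
          have rk: "\<forall>j<C. r j < q" using rK unfolding Keys_def by auto
          have honest: "\<forall>i<C. i \<notin> Zw \<longrightarrow> (\<forall>t<n. y i t = wrd C n q b c k D Lh cw m r i t)"
            unfolding y_def chan_def received_ow_def wm_def by auto
          have yb: "\<forall>i<C. \<forall>t<D. y i t < b"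
          proof (intro allI impI)
            fix i t assume it: "i < C" "t < D"
            show "y i t < b"
            proof (cases "i \<in> Zw")
              case True
              hence "y i t = J i t (wm r)" unfolding y_def chan_def received_ow_def using it Dn by auto
              thus ?thesis using Jb qub[OF it(1)] by (metis less_le_trans)
            next
              case False
              hence "y i t = cw m i t" using honest it Dn wrd_data[of i C t D n] by auto
              thus ?thesis using cwb mK it by auto
            qed
          qed
          have G: "\<forall>i\<in>Zw. \<forall>j<C. j \<notin> Zw \<longrightarrow> (\<exists>t<D. y i t \<noteq> cw m i t) \<longrightarrow> hsh b c k (r j) (y i) \<noteq> hsh b c k (r j) (cw m i)"
          proof (intro ballI allI impI)
            fix i j assume i: "i \<in> Zw" and j: "j < C" "j \<notin> Zw" and ex: "\<exists>t<D. y i t \<noteq> cw m i t"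
            have yF: "\<forall>t<D. y i t = Fr i t" unfolding y_def using indep by auto
            have "(i, j) \<in> I" unfolding I_def using i j ex yF by auto
            hence "r j \<notin> Rt i" using nb rK by auto
            hence "hsh b c k (r j) (Fr i) \<noteq> hsh b c k (r j) (cw m i)" unfolding Rt_def by auto
            moreover have "hsh b c k (r j) (y i) = hsh b c k (r j) (Fr i)"
              using yF unfolding D_def by (intro hsh_cong) auto
            ultimately show "hsh b c k (r j) (y i) \<noteq> hsh b c k (r j) (cw m i)" by simp
          qed
          have "decw K C w q b c k D Lh cw y = m"
            by (rule decode_correct[OF q2 bpos D_def Lhb len' Zsub cZ _ mK cwb dist rk honest yb G])
               (use wC in \<open>simp add: w_def\<close>)
          thus False using dne unfolding dec_def y_def by simp
        qed
      qed
      have cI: "card I \<le> C * C"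
      proof -
        have "I \<subseteq> {..<C} \<times> {..<C}" unfolding I_def using Zsub by auto
        hence "card I \<le> card ({..<C} \<times> {..<C})" by (intro card_mono) auto
        thus ?thesis by (simp add: card_cartesian_product)
      qed
      have fI: "finite I"
      proof -
        have "I \<subseteq> {..<C} \<times> {..<C}" unfolding I_def using Zsub by auto
        thus ?thesis by (rule finite_subset) auto
      qed
      have cp: "card {r \<in> Keys C q. r (snd p) \<in> Rt (fst p)} \<le> k * q ^ (C - 1)" if pI: "p \<in> I" for p
      proof -
        obtain i j where p: "p = (i, j)" by (cases p)
        have i: "i \<in> Zw" "i < C" and j: "j < C" and ex: "\<exists>t<D. Fr i t \<noteq> cw m i t"
          using pI Zsub unfolding p I_def by auto
        have Fb: "\<forall>t<k*c. Fr i t < b"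
        proof (intro allI impI)
          fix t assume "t < k * c"
          hence "t < n" using Dn unfolding D_def by simp
          hence "Fr i t = J i t (wm r0)" unfolding Fr_def chan_def received_ow_def using i by auto
          thus "Fr i t < b" using Jb qub[OF i(2)] by (metis less_le_trans)
        qed
        have cb: "\<forall>t<k*c. cw m i t < b" using cwb mK i(2) unfolding D_def by auto
        have ex': "\<exists>t<k*c. Fr i t \<noteq> cw m i t" using ex unfolding D_def .
        have hc: "finite (Rt i) \<and> card (Rt i) \<le> k" unfolding Rt_def using hsh_collision[OF Fb cb ex'] .
        have "card {r \<in> Keys C q. r j \<in> Rt i} \<le> card (Rt i \<inter> {..<q}) * q ^ (C - 1)" by (rule card_keys_bad[OF j])
        also have "\<dots> \<le> card (Rt i) * q ^ (C - 1)" using hc by (intro mult_right_mono card_mono) auto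
        also have "\<dots> \<le> k * q ^ (C - 1)" using hc by (intro mult_right_mono) auto
        finally show ?thesis unfolding p by simp
      qed
      have "card {r \<in> Keys C q. wm r \<in> {x. dec (chan x) \<noteq> m}} \<le> card (\<Union>p\<in>I. {r \<in> Keys C q. r (snd p) \<in> Rt (fst p)})"
        by (intro card_mono[OF _ sub] finite_subset[OF _ fK]) auto
      also have "\<dots> \<le> (\<Sum>p\<in>I. card {r \<in> Keys C q. r (snd p) \<in> Rt (fst p)})" by (rule card_UN_le[OF fI])
      also have "\<dots> \<le> (\<Sum>p\<in>I. k * q ^ (C - 1))" using cp by (intro sum_mono) auto
      also have "\<dots> = card I * (k * q ^ (C - 1))" by simp
      also have "\<dots> \<le> C * C * (k * q ^ (C - 1))" using cI by (intro mult_right_mono) auto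
      finally have cb0: "card {r \<in> Keys C q. wm r \<in> {x. dec (chan x) \<noteq> m}} \<le> C * C * (k * q ^ (C - 1))" .
      have cb: "real (card {r \<in> Keys C q. wm r \<in> {x. dec (chan x) \<noteq> m}}) \<le> real (C * C * k) * real q ^ (C - 1)"
      proof -
        have "real (card {r \<in> Keys C q. wm r \<in> {x. dec (chan x) \<noteq> m}}) \<le> real (C * C * (k * q ^ (C - 1)))"
          using cb0 by (simp only: of_nat_le_iff)
        thus ?thesis by (simp add: mult.assoc)
      qed
      have qC: "real q ^ C = real q * real q ^ (C - 1)" using C1 by (metis Suc_diff_le diff_Suc_1 power_Suc)
      have "measure_pmf.prob (enc m) {x. dec (chan x) \<noteq> m} = real (card {r \<in> Keys C q. wm r \<in> {x. dec (chan x) \<noteq> m}}) / real q ^ C"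
        unfolding probenc wm_def card_keys by simp
      also have "\<dots> \<le> real (C * C * k) * real q ^ (C - 1) / real q ^ C"
        using cb q0 by (intro divide_right_mono) auto
      also have "\<dots> = real (C * C * k) / real q" unfolding qC using q0 by (simp add: field_simps)
      finally show ?thesis .
    qed
    have "err_prob K enc dec chan = (\<Sum>m<K. measure_pmf.prob (enc m) {x. dec (chan x) \<noteq> m}) / real K"
      unfolding err_prob_def ..
    also have "\<dots> \<le> (\<Sum>m<K. real (C*C*k) / real q) / real K"
      using perm by (intro divide_right_mono sum_mono) auto
    also have "\<dots> = real (C*C*k) / real q" using Kpos by simp
    also have "\<dots> < \<epsilon>" by (rule small)
    finally show "err_prob K enc dec (received_ow C n (Zrw \<union> Zwo) J) < \<epsilon>" unfolding chan_def Zw_def .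
  qed
qed

lemma big_ineq:
  fixes q k c n Um T C :: nat and R :: real
  assumes q2: "q \<ge> 2" and R0: "R \<ge> 0" and TU: "Um \<le> T"
    and key: "real n * R + real C + 1 < real (k*c) * real (T - Um)"
  shows "num_msgs q n R * (2^C * q^(k*c*Um)) < q^(k*c*T)"
proof -
  define x where "x = real q powr (real n * R)"
  define D where "D = k * c"
  have qr: "real q \<ge> 2" using q2 by simp
  have x1: "x \<ge> 1" unfolding x_def using qr R0 by (intro ge_one_powr_ge_zero) auto
  have K1: "real (num_msgs q n R) \<le> x + 1"
  proof -
    have "real (num_msgs q n R) = real_of_int \<lceil>x\<rceil>" unfolding num_msgs_def x_def
      using x1 unfolding x_def by (simp add: of_nat_nat)
    also have "\<dots> \<le> x + 1" by linarith
    finally show ?thesis .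
  qed
  have K2: "real (num_msgs q n R) \<le> 2 * x" using K1 x1 by linarith
  have c2: "(2::real)^C \<le> real q ^ C" using qr by (intro power_mono) auto
  have "real (num_msgs q n R * (2^C * q^(D*Um))) = real (num_msgs q n R) * 2^C * real q^(D*Um)" by simp
  also have "\<dots> \<le> (2 * x) * real q ^ C * real q^(D*Um)"
    using K2 c2 x1 by (intro mult_mono) auto
  also have "\<dots> \<le> (real q * x) * real q ^ C * real q^(D*Um)"
    using qr x1 by (intro mult_right_mono) auto
  also have "real q * x * real q ^ C = real q powr (real n * R + real C + 1)"
    unfolding x_def using qr by (simp add: powr_add powr_realpow algebra_simps)
  also have "real q powr (real n * R + real C + 1) < real q powr (real D * real (T - Um))"
    using key qr unfolding D_def by (intro powr_less_mono) auto
  also have "real q powr (real D * real (T - Um)) = real q ^ (D * (T - Um))"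
  proof -
    have e: "real D * real (T - Um) = real (D * (T - Um))" by simp
    show ?thesis unfolding e using qr by (subst powr_realpow) auto
  qed
  finally have "real (num_msgs q n R * (2^C * q^(D*Um))) < real q ^ (D * (T - Um)) * real q^(D*Um)"
    using qr by simp
  also have "\<dots> = real q ^ (D * T)" using TU by (simp add: power_add[symmetric] diff_mult_distrib2)
  finally have "real (num_msgs q n R * (2^C * q^(D*Um))) < real (q ^ (D * T))" by simp
  thus ?thesis unfolding D_def by (simp only: of_nat_less_iff)
qed


lemma achievable_below:
  assumes hu: "\<forall>i<C. u i > 0" and wC: "2*(zrw+zwo) < C" and R0: "0 \<le> R"
    and RV: "R < real (total_cap C u) - real (U_max C u (zrw+zwo))"
  shows "achievable_ow C u (zrw,zro,zwo) R"
proof -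
  define T where "T = total_cap C u"
  define Um where "Um = U_max C u (zrw+zwo)"
  define V0 where "V0 = T - Um"
  have TU: "Um \<le> T" unfolding T_def Um_def using wC by (intro umax_le_total) simp
  have rV: "real V0 = real T - real Um" unfolding V0_def using TU by (simp add: of_nat_diff)
  have RV': "R < real V0" using RV rV unfolding T_def Um_def by simp
  define L0 where "L0 = C * T + 1"
  define k where "k = nat \<lceil>R * real L0 / (real V0 - R)\<rceil> + 1"
  have kgt: "real k > R * real L0 / (real V0 - R)" unfolding k_def by linarith
  hence "real k * (real V0 - R) > R * real L0" using RV' by (simp add: field_simps)
  define L where "L = k + L0"
  have Lpos: "L > 0" unfolding L_def L0_def by simp
  have "R * real L < real k * real V0" using \<open>real k * (real V0 - R) > R * real L0\<close>
    unfolding L_def by (simp add: algebra_simps)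
  hence dpos: "real k * real V0 / real L - R > 0" using Lpos by (simp add: field_simps)
  define \<delta> where "\<delta> = real k * real V0 / real L - R"
  have \<delta>0: "\<delta> > 0" unfolding \<delta>_def using dpos .
  show ?thesis unfolding achievable_ow_def
  proof (intro conjI R0 allI impI)
    fix \<epsilon> :: real assume e0: "\<epsilon> > 0"
    define Q where "Q = max 2 (nat \<lceil>real (C*C*k) / \<epsilon>\<rceil> + 1)"
    show "\<exists>Q. \<forall>q\<ge>Q. \<exists>N. \<forall>n\<ge>N. good_code_ow C u (zrw, zro, zwo) q n R \<epsilon>"
    proof (rule exI[of _ Q], intro allI impI)
      fix q assume qQ: "q \<ge> Q"
      have q2: "q \<ge> 2" using qQ unfolding Q_def by simp
      have "real q > real (C*C*k) / \<epsilon>" using qQ unfolding Q_def by linarith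
      hence small: "real (C*C*k) / real q < \<epsilon>" using e0 q2 by (simp add: field_simps)
      define N where "N = max (L*(C*k+1)) (nat \<lceil>(real k * real V0 + real C + 2) / \<delta>\<rceil> + 1)"
      show "\<exists>N. \<forall>n\<ge>N. good_code_ow C u (zrw, zro, zwo) q n R \<epsilon>"
      proof (rule exI[of _ N], intro allI impI)
        fix n assume nN: "n \<ge> N"
        define c where "c = n div L"
        have "L*(C*k+1) \<le> n" using nN unfolding N_def by simp
        hence "L*(C*k+1) div L \<le> n div L" by (rule div_le_mono)
        hence cge: "C*k+1 \<le> c" unfolding c_def using Lpos by simp
        have Lc: "L * c \<le> n" unfolding c_def by (simp add: mult.commute)
        have len: "Suc (k*c) + C * (total_cap C u * c + k) \<le> n"
        proof -
          have "Suc (k*c) + C * (T * c + k) = k*c + C*T*c + (C*k + 1)" by (simp add: algebra_simps)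
          also have "\<dots> \<le> k*c + C*T*c + c" using cge by simp
          also have "\<dots> = L * c" unfolding L_def L0_def by (simp add: algebra_simps)
          finally show ?thesis using Lc unfolding T_def by simp
        qed
        have "real n < real L * (real c + 1)"
        proof -
          have e: "L * (n div L + 1) = L * (n div L) + L" by simp
          have "n = L * (n div L) + n mod L" by simp
          moreover have "n mod L < L" using Lpos by simp
          ultimately have "n < L * (n div L + 1)" using e by linarith
          hence "real n < real (L * (c + 1))" unfolding c_def by (simp only: of_nat_less_iff)
          thus ?thesis by (simp add: algebra_simps)
        qed
        hence cgt: "real c > real n / real L - 1" using Lpos by (simp add: field_simps)
        have "real N > (real k * real V0 + real C + 2) / \<delta>" unfolding N_def by linarith
        hence "\<delta> * real N > real k * real V0 + real C + 2" using \<delta>0 by (simp add: field_simps)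
        moreover have "\<delta> * real N \<le> \<delta> * real n" using nN \<delta>0 by (intro mult_left_mono) auto
        ultimately have "\<delta> * real n > real k * real V0 + real C + 2" by linarith
        hence "real n * \<delta> > real k * real V0 + real C + 2" by (simp add: mult.commute)
        have kV0: "real k * real V0 \<ge> 0" by simp
        have "real (k*c) * real V0 = real k * real V0 * real c" by simp
        also have "\<dots> \<ge> real k * real V0 * (real n / real L - 1)" using cgt kV0 by (intro mult_left_mono) auto
        also have "real k * real V0 * (real n / real L - 1) = real n * (\<delta> + R) - real k * real V0"
          unfolding \<delta>_def using Lpos by (simp add: field_simps)
        finally have "real (k*c) * real V0 \<ge> real n * (\<delta> + R) - real k * real V0" .
        hence key: "real n * R + real C + 1 < real (k*c) * real (T - Um)"
          using \<open>real n * \<delta> > real k * real V0 + real C + 2\<close> unfolding V0_def[symmetric]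
          by (simp add: algebra_simps)
        have big: "num_msgs q n R * (2^C * q^(k*c * U_max C u (zrw+zwo))) < q^(k*c * total_cap C u)"
          using big_ineq[OF q2 R0 TU key] unfolding T_def Um_def .
        show "good_code_ow C u (zrw, zro, zwo) q n R \<epsilon>"
          by (rule ach_qn[OF hu q2 len wC big small])
      qed
    qed
  qed
qed

lemma achievable_zero:
  shows "achievable_ow C u z 0"
  unfolding achievable_ow_def
proof (intro conjI order_refl allI impI)
  fix \<epsilon> :: real assume e0: "\<epsilon> > 0"
  show "\<exists>Q. \<forall>q\<ge>Q. \<exists>N. \<forall>n\<ge>N. good_code_ow C u z q n 0 \<epsilon>"
  proof (rule exI[of _ 1], intro allI impI, rule exI[of _ 0], intro allI impI)
    fix q n :: nat assume q1: "q \<ge> 1"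
    have K: "num_msgs q n 0 = 1" unfolding num_msgs_def using q1 by simp
    define enc :: "nat \<Rightarrow> netword pmf" where "enc = (\<lambda>m. return_pmf (\<lambda>_ _. 0))"
    define dec :: "netword \<Rightarrow> nat" where "dec = (\<lambda>_. 0)"
    show "good_code_ow C u z q n 0 \<epsilon>" unfolding good_code_ow_def K
    proof (rule exI[of _ enc], rule exI[of _ dec], intro conjI allI impI)
      fix m assume "m < (1::nat)"
      show "set_pmf (enc m) \<subseteq> {x. valid_word C u q n x}"
        unfolding enc_def valid_word_def using q1 by auto
    next
      fix Zrw Zro Zwo J
      show "err_prob 1 enc dec (received_ow C n (Zrw \<union> Zwo) J) < \<epsilon>"
        unfolding err_prob_def dec_def using e0 by simp
    qed
  qed
qed


theorem theorem4:
  fixes C :: nat and u :: "nat \<Rightarrow> nat" and zrw zro zwo :: nat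
  assumes "\<forall>i < C. u i > 0"
    and "zrw + zro + zwo \<le> C"
  shows "capacity_ow C u (zrw, zro, zwo) =
           (if 2 * zwo + 2 * zrw < C
            then real (total_cap C u) - real (U_max C u (zrw + zwo))
            else 0)"
proof -
  define S where "S = {R. achievable_ow C u (zrw, zro, zwo) R}"
  have S0: "0 \<in> S" unfolding S_def by (simp add: achievable_zero)
  have Snn: "R \<ge> 0" if "R \<in> S" for R using that unfolding S_def achievable_ow_def by auto
  show ?thesis
  proof (cases "2 * zwo + 2 * zrw < C")
    case True
    define V where "V = real (total_cap C u) - real (U_max C u (zrw + zwo))"
    have wC: "2*(zrw+zwo) < C" using True by simp
    have up: "R \<le> V" if "R \<in> S" for R
      using converse_erasure[of C u zrw zro zwo R] that assms(2) unfolding S_def V_def by auto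
    have below: "R \<in> S" if "0 \<le> R" "R < V" for R
      unfolding S_def using achievable_below[OF assms(1) wC that(1)] that(2) unfolding V_def by auto
    have "Sup S = V"
    proof (rule cSup_eq_non_empty)
      show "S \<noteq> {}" using S0 by auto
      show "\<And>x. x \<in> S \<Longrightarrow> x \<le> V" by (rule up)
      fix y assume ub: "\<And>x. x \<in> S \<Longrightarrow> x \<le> y"
      show "V \<le> y"
      proof (rule ccontr)
        assume "\<not> V \<le> y"
        hence yV: "y < V" by simp
        have y0: "0 \<le> y" using ub[OF S0] .
        have "(y + V) / 2 \<in> S" using below[of "(y + V) / 2"] y0 yV by auto
        hence "(y + V) / 2 \<le> y" by (rule ub)
        thus False using yV by simp
      qed
    qed
    thus ?thesis unfolding capacity_ow_def S_def[symmetric] V_def using True by simp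
  next
    case False
    have big: "C \<le> 2 * (zrw + zwo)" using False by simp
    have "S = {0}"
    proof
      show "S \<subseteq> {0}"
      proof
        fix R assume R: "R \<in> S"
        have "R \<le> 0" using converse_symm[OF _ big] R unfolding S_def by auto
        thus "R \<in> {0}" using Snn[OF R] by simp
      qed
      show "{0} \<subseteq> S" using S0 by simp
    qed
    thus ?thesis unfolding capacity_ow_def S_def[symmetric] using False by simp
  qed
qed

end
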